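(* Let $q\ge 2$ and $1-\frac1{2q}<\alpha,\beta<1$. For every $(t,s)\in[0,1]^2$, the kernels $h_{N,M}(t,s)$ converge in $(\mathcal H^{\alpha,\beta})^{\otimes q}$ as $N,M\to\infty$ to a limit $\mu^{(q)}_{t,s}$, and the Hermite sheet $Z_{t,s}:=I_q(\mu^{(q)}_{t,s})$ satisfies, for all $(t,s),(u,v)\in[0,1]^2$, $$E[Z_{t,s}Z_{u,v}]=R_{q(\alpha-1)+1}(t,u)\,R_{q(\beta-1)+1}(s,v),$$ i.e. $Z$ has the covariance of a fractional Brownian sheet with Hurst indices $(q(\alpha-1)+1,\,q(\beta-1)+1)$.
   Context: $W$ is a fractional Brownian sheet on $[0,1]^2$ with Hurst indices $(\alpha,\beta)$ (centered Gaussian with covariance $R_\alpha(s_1,s_2)R_\beta(t_1,t_2)$), where $R_H(x,y)=\frac12(x^{2H}+y^{2H}-|x-y|^{2H})$. $\mathcal H^{\alpha,\beta}$ is the closure of step functions on $[0,1]^2$ under $\langle \mathbf 1_{[0,s_1]\times[0,t_1]},\mathbf 1_{[0,s_2]\times[0,t_2]}\rangle=R_\alpha(s_1,s_2)R_\beta(t_1,t_2)$; $I_q$ is the $q$-th multiple Wiener–Itô integral w.r.t. $W$. With $\Delta i=[\frac iN,\frac{i+1}N]$, $\Delta j=[\frac jM,\frac{j+1}M]$, $\kappa_\gamma=\frac{\gamma^q(2\gamma-1)^q}{(\gamma q-q+1)(2\gamma q-2q+1)}$ and $\varphi=\sqrt{\frac{q!}{\kappa_\alpha\kappa_\beta}}N^{q-1}M^{q-1}$,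 define $h_{N,M}(t,s)=\frac{\varphi}{q!}\sum_{i=0}^{[(N-1)t]}\sum_{j=0}^{[(M-1)s]}\mathbf 1_{\Delta i\times\Delta j}^{\otimes q}$ ($[\cdot]$ the integer part). *)

theory Defs
  imports "HOL-Probability.Probability"
begin

definition R :: "real \<Rightarrow> real \<Rightarrow> real \<Rightarrow> real" where
  "R H x y = (x powr (2*H) + y powr (2*H) - \<bar>x - y\<bar> powr (2*H)) / 2"

text \<open>A rectangle (a,b,c,d) stands for [a,b] x [c,d] in [0,1]^2.\<close>
type_synonym rect = "real \<times> real \<times> real \<times> real"

definition valid_rect :: "rect \<Rightarrow> bool" where
  "valid_rect r = (case r of (a,b,c,d) \<Rightarrow> 0 \<le> a \<and> a \<le> b \<and> b \<le> 1 \<and> 0 \<le> c \<and> c \<le> d \<and> d \<le> 1)"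

text \<open>Inner product in H^{alpha,beta} of indicators of two rectangles, obtained by
  bilinearity from the defining relation on indicators of [0,s] x [0,t].\<close>
definition ipH :: "real \<Rightarrow> real \<Rightarrow> rect \<Rightarrow> rect \<Rightarrow> real" where
  "ipH \<alpha> \<beta> r r' = (case r of (a,b,c,d) \<Rightarrow> case r' of (a',b',c',d') \<Rightarrow>
      (R \<alpha> b b' - R \<alpha> b a' - R \<alpha> a b' + R \<alpha> a a') *
      (R \<beta> d d' - R \<beta> d c' - R \<beta> c d' + R \<beta> c c'))"

definition kappa :: "real \<Rightarrow> nat \<Rightarrow> real" where
  "kappa \<gamma> q = \<gamma>^q * (2*\<gamma> - 1)^q / ((\<gamma>*q - q + 1) * (2*\<gamma>*q - 2*q + 1))"

definition phi :: "nat \<Rightarrow> real \<Rightarrow> real \<Rightarrow> nat \<Rightarrow> nat \<Rightarrow> real" where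
  "phi q \<alpha> \<beta> N M = sqrt (fact q / (kappa \<alpha> q * kappa \<beta> q)) * real N ^ (q-1) * real M ^ (q-1)"

text \<open>The kernel h_{N,M}(t,s), an element of the tensor power; E xs denotes the
  elementary tensor of the indicators of the rectangles in the list xs.\<close>
definition hNM :: "(rect list \<Rightarrow> 'a::real_vector) \<Rightarrow> nat \<Rightarrow> real \<Rightarrow> real \<Rightarrow> nat \<Rightarrow> nat \<Rightarrow> real \<Rightarrow> real \<Rightarrow> 'a" where
  "hNM E q \<alpha> \<beta> N M t s = (phi q \<alpha> \<beta> N M / fact q) *\<^sub>R
     (\<Sum>i\<in>{0..nat \<lfloor>(real N - 1) * t\<rfloor>}. \<Sum>j\<in>{0..nat \<lfloor>(real M - 1) * s\<rfloor>}.
        E (replicate q (real i / N, real (i+1) / N, real j / M, real (j+1) / M)))"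

end

theory Submission
  imports Defs
begin


lemma mvt_powr:
  fixes x y e :: real
  assumes "0 < x" "x < y"
  shows "\<exists>z. x < z \<and> z < y \<and> y powr e - x powr e = (y - x) * (e * z powr (e - 1))"
proof -
  have "\<exists>z. x < z \<and> z < y \<and> (y powr e - x powr e = (y - x) * (e * z powr (e - 1)))"
    by (rule MVT2[OF assms(2)]) (use assms in \<open>auto intro!: has_real_derivative_powr\<close>)
  then show ?thesis by blast
qed

lemma deriv_pw:
  fixes r z :: real
  assumes r: "r > 1"
  shows "((\<lambda>z. \<bar>z\<bar> powr r) has_real_derivative (r * sgn z * \<bar>z\<bar> powr (r - 1))) (at z)"
proof (cases "z = 0")
  case False
  show ?thesis
  proof (cases "z > 0")
    case True
    have ev: "eventually (\<lambda>x. \<bar>x\<bar> powr r = x powr r) (nhds z)"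
      using eventually_nhds_in_open[of "{0<..}" z] True
      by (auto elim!: eventually_mono)
    show ?thesis
      by (subst DERIV_cong_ev[OF refl ev refl])
         (use True in \<open>auto intro!: derivative_eq_intros simp: sgn_if\<close>)
  next
    case False
    with \<open>z \<noteq> 0\<close> have z: "z < 0" by simp
    have ev: "eventually (\<lambda>x. \<bar>x\<bar> powr r = (- x) powr r) (nhds z)"
      using eventually_nhds_in_open[of "{..<0}" z] z
      by (auto elim!: eventually_mono)
    show ?thesis
      by (subst DERIV_cong_ev[OF refl ev refl])
         (use z in \<open>auto intro!: derivative_eq_intros simp: sgn_if\<close>)
  qed
next
  case True
  have lim: "((\<lambda>h. \<bar>h\<bar> powr (r - 1)) \<longlongrightarrow> 0) (at (0::real))"
  proof -
    have "((\<lambda>h. \<bar>h\<bar> powr (r - 1)) \<longlongrightarrow> \<bar>0\<bar> powr (r - 1)) (at (0::real))"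
      using r by (intro tendsto_intros) auto
    then show ?thesis by simp
  qed
  have "((\<lambda>h. (\<bar>0 + h\<bar> powr r - \<bar>0\<bar> powr r) / h) \<longlongrightarrow> 0) (at (0::real))"
  proof (rule Lim_null_comparison[OF _ lim])
    show "\<forall>\<^sub>F h in at 0. norm ((\<bar>0 + h\<bar> powr r - \<bar>0\<bar> powr r) / h) \<le> \<bar>h\<bar> powr (r - 1)"
    proof (rule eventually_at_filter[THEN iffD2], intro always_eventually allI impI)
      fix h :: real assume "h \<noteq> 0"
      then show "norm ((\<bar>0 + h\<bar> powr r - \<bar>0\<bar> powr r) / h) \<le> \<bar>h\<bar> powr (r - 1)"
        by (simp add: powr_diff abs_divide)
    qed
  qed
  then show ?thesis using True by (simp add: DERIV_def)
qed



definition pw :: "real \<Rightarrow> real \<Rightarrow> real" where "pw r z = \<bar>z\<bar> powr r"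
definition DD :: "(real \<Rightarrow> real) \<Rightarrow> real \<Rightarrow> real \<Rightarrow> real \<Rightarrow> real \<Rightarrow> real" where
  "DD f a b a' b' = f (b - b') - f (b - a') - f (a - b') + f (a - a')"
definition fd :: "real \<Rightarrow> real \<Rightarrow> real" where "fd r z = r * sgn z * \<bar>z\<bar> powr (r - 1)"

lemma holder_pos0:
  fixes u v s :: real
  assumes "0 < v" "v < u" "0 < s" "s \<le> 1"
  shows "u powr s - v powr s \<le> 2 * (u - v) powr s"
proof (cases "v \<le> u - v")
  case True
  have "u powr s - v powr s \<le> u powr s" by simp
  also have "\<dots> \<le> (2 * (u - v)) powr s"
    using True assms by (intro powr_mono2) auto
  also have "\<dots> = 2 powr s * (u - v) powr s"
    using True assms by (intro powr_mult; simp)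
  also have "\<dots> \<le> 2 * (u - v) powr s"
  proof -
    have "2 powr s \<le> 2 powr 1" using assms by (intro powr_mono) auto
    then show ?thesis by (intro mult_right_mono) auto
  qed
  finally show ?thesis .
next
  case False
  have vu: "v < u" using assms by simp
  obtain z where z: "v < z" "z < u" "u powr s - v powr s = (u - v) * (s * z powr (s - 1))"
    using mvt_powr[OF assms(1) vu] by blast
  have "z powr (s - 1) \<le> (u - v) powr (s - 1)"
    using z False assms by (intro powr_mono2') auto
  then have "u powr s - v powr s \<le> (u - v) * (s * (u - v) powr (s - 1))"
    unfolding z(3) using assms vu by (intro mult_left_mono) auto
  also have "\<dots> = s * (u - v) powr s"
    using vu by (simp add: powr_diff field_simps)
  also have "\<dots> \<le> 2 * (u - v) powr s"
    using assms by (intro mult_right_mono) auto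
  finally show ?thesis .
qed

lemma holder_pos:
  fixes u v s :: real
  assumes "0 < v" "v \<le> u" "0 < s" "s \<le> 1"
  shows "u powr s - v powr s \<le> 2 * (u - v) powr s"
  using holder_pos0[of v u s] assms by (cases "v = u") auto

lemma holder:
  fixes x y s :: real
  assumes "0 < s" "s \<le> 1"
  shows "\<bar>sgn x * \<bar>x\<bar> powr s - sgn y * \<bar>y\<bar> powr s\<bar> \<le> 2 * \<bar>x - y\<bar> powr s"
proof (cases "x * y \<le> 0")
  case True
  have "\<bar>sgn x * \<bar>x\<bar> powr s - sgn y * \<bar>y\<bar> powr s\<bar> \<le> \<bar>x\<bar> powr s + \<bar>y\<bar> powr s"
    by (auto simp: sgn_if abs_if)
  also have "\<dots> \<le> \<bar>x - y\<bar> powr s + \<bar>x - y\<bar> powr s"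
    using True assms by (intro add_mono powr_mono2) (auto simp: mult_le_0_iff)
  finally show ?thesis by simp
next
  case False
  then have same: "(x > 0 \<and> y > 0) \<or> (x < 0 \<and> y < 0)"
    by (metis linorder_neqE_linordered_idom mult_nonneg_nonpos mult_nonpos_nonneg not_le order_less_imp_le)
  have key: "\<bar>\<bar>x\<bar> powr s - \<bar>y\<bar> powr s\<bar> \<le> 2 * \<bar>\<bar>x\<bar> - \<bar>y\<bar>\<bar> powr s"
  proof (cases "\<bar>y\<bar> \<le> \<bar>x\<bar>")
    case True
    then have "\<bar>x\<bar> powr s - \<bar>y\<bar> powr s \<le> 2 * (\<bar>x\<bar> - \<bar>y\<bar>) powr s"
      using same assms by (intro holder_pos) auto
    moreover have "\<bar>y\<bar> powr s \<le> \<bar>x\<bar> powr s" using True assms by (intro powr_mono2) auto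
    ultimately show ?thesis using True by simp
  next
    case False
    then have "\<bar>y\<bar> powr s - \<bar>x\<bar> powr s \<le> 2 * (\<bar>y\<bar> - \<bar>x\<bar>) powr s"
      using same assms by (intro holder_pos) auto
    moreover have "\<bar>x\<bar> powr s \<le> \<bar>y\<bar> powr s" using False assms by (intro powr_mono2) auto
    ultimately show ?thesis using False by simp
  qed
  have "\<bar>\<bar>x\<bar> - \<bar>y\<bar>\<bar> = \<bar>x - y\<bar>" using same by auto
  moreover have "\<bar>sgn x * \<bar>x\<bar> powr s - sgn y * \<bar>y\<bar> powr s\<bar> = \<bar>\<bar>x\<bar> powr s - \<bar>y\<bar> powr s\<bar>"
    using same by (auto simp: sgn_if abs_minus_commute)
  ultimately show ?thesis using key by simp
qed

lemma DD_swap: "DD (pw r) a b a' b' = DD (pw r) a' b' a b"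
  unfolding DD_def pw_def by (simp add: abs_minus_commute)

lemma DD_mvt:
  fixes r a b a' b' :: real
  assumes r: "r > 1" and ab: "a < b" and ab': "a' < b'"
  shows "\<exists>\<tau>. 0 < \<tau> \<and> \<tau> < b' - a' \<and>
     DD (pw r) a b a' b' = (b' - a') * (fd r (a - b' + \<tau>) - fd r (a - b' + (b - a) + \<tau>))"
proof -
  define g where "g \<tau> = pw r (a - b' + \<tau>) - pw r (a - b' + (b - a) + \<tau>)" for \<tau>
  have d1: "((\<lambda>\<tau>. pw r (c + \<tau>)) has_real_derivative fd r (c + \<tau>)) (at \<tau>)" for c \<tau>
  proof -
    have "((\<lambda>x. \<bar>x + c\<bar> powr r) has_real_derivative fd r (\<tau> + c)) (at \<tau>)"
      using DERIV_shift[of "\<lambda>z. \<bar>z\<bar> powr r" "fd r (\<tau>+c)" \<tau> c] deriv_pw[OF r, of "\<tau> + c"]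
      by (simp add: fd_def)
    then show ?thesis by (simp add: pw_def add.commute)
  qed
  have der: "(g has_real_derivative (fd r (a - b' + \<tau>) - fd r (a - b' + (b - a) + \<tau>))) (at \<tau>)" for \<tau>
    unfolding g_def by (intro DERIV_diff d1)
  obtain \<tau> where t: "0 < \<tau>" "\<tau> < b' - a'"
     "g (b' - a') - g 0 = (b' - a' - 0) * (fd r (a - b' + \<tau>) - fd r (a - b' + (b - a) + \<tau>))"
    using MVT2[of 0 "b' - a'" g "\<lambda>\<tau>. fd r (a - b' + \<tau>) - fd r (a - b' + (b - a) + \<tau>)"] ab' der
    by auto
  have "g (b' - a') - g 0 = DD (pw r) a b a' b'"
    unfolding g_def DD_def by (simp add: algebra_simps)
  with t show ?thesis by auto
qed

lemma DD_crude0: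
  fixes r a b a' b' :: real
  assumes r: "1 < r" "r \<le> 2" and ab: "a < b" and ab': "a' < b'" and le: "b' - a' \<le> b - a"
  shows "\<bar>DD (pw r) a b a' b'\<bar> \<le> 2 * r * ((b - a) * (b' - a')) * (b - a) powr (r - 2)"
proof -
  obtain \<tau> where t: "0 < \<tau>" "\<tau> < b' - a'"
     "DD (pw r) a b a' b' = (b' - a') * (fd r (a - b' + \<tau>) - fd r (a - b' + (b - a) + \<tau>))"
    using DD_mvt[OF r(1) ab ab'] by blast
  have "\<bar>fd r (a - b' + \<tau>) - fd r (a - b' + (b - a) + \<tau>)\<bar>
      = r * \<bar>sgn (a - b' + \<tau>) * \<bar>a - b' + \<tau>\<bar> powr (r - 1)
           - sgn (a - b' + (b - a) + \<tau>) * \<bar>a - b' + (b - a) + \<tau>\<bar> powr (r - 1)\<bar>"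
    unfolding fd_def using r by (simp add: abs_mult right_diff_distrib[symmetric] mult.assoc)
  also have "\<dots> \<le> r * (2 * \<bar>(a - b' + \<tau>) - (a - b' + (b - a) + \<tau>)\<bar> powr (r - 1))"
    using r by (intro mult_left_mono holder) auto
  also have "\<dots> = 2 * r * (b - a) powr (r - 1)" using ab by simp
  also have "\<dots> = 2 * r * ((b - a) * (b - a) powr (r - 2))"
  proof -
    have "(b - a) powr (r - 1) = (b - a) powr (1 + (r - 2))" by simp
    also have "\<dots> = (b - a) powr 1 * (b - a) powr (r - 2)" by (rule powr_add)
    also have "\<dots> = (b - a) * (b - a) powr (r - 2)" using ab by simp
    finally show ?thesis by simp
  qed
  finally have *: "\<bar>fd r (a - b' + \<tau>) - fd r (a - b' + (b - a) + \<tau>)\<bar> \<le> 2 * r * ((b - a) * (b - a) powr (r - 2))" .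
  have "\<bar>DD (pw r) a b a' b'\<bar> = (b' - a') * \<bar>fd r (a - b' + \<tau>) - fd r (a - b' + (b - a) + \<tau>)\<bar>"
    using t ab' by (simp add: abs_mult)
  also have "\<dots> \<le> (b' - a') * (2 * r * ((b - a) * (b - a) powr (r - 2)))"
    using * ab' by (intro mult_left_mono) auto
  finally show ?thesis by (simp add: algebra_simps)
qed

lemma DD_crude:
  fixes r a b a' b' :: real
  assumes r: "1 < r" "r \<le> 2" and ab: "a < b" and ab': "a' < b'"
  shows "\<bar>DD (pw r) a b a' b'\<bar> \<le> 2 * r * ((b - a) * (b' - a')) * (max (b - a) (b' - a')) powr (r - 2)"
proof (cases "b' - a' \<le> b - a")
  case True
  then show ?thesis using DD_crude0[OF r ab ab' True] by (simp add: max_def)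
next
  case False
  then show ?thesis using DD_crude0[OF r ab' ab] DD_swap[of r a b a' b']
    by (simp add: max_def mult.commute)
qed

lemma DD_far:
  fixes r a b a' b' :: real
  assumes r: "r > 1" and ab: "a < b" and gap: "b < a'" and ab': "a' < b'"
  shows "\<exists>z. a' - b < z \<and> z < b' - a \<and>
     - DD (pw r) a b a' b' = r * (r - 1) * ((b - a) * (b' - a')) * z powr (r - 2)"
proof -
  obtain \<tau> where t: "0 < \<tau>" "\<tau> < b' - a'"
     "DD (pw r) a b a' b' = (b' - a') * (fd r (a - b' + \<tau>) - fd r (a - b' + (b - a) + \<tau>))"
    using DD_mvt[OF r ab ab'] by blast
  define X where "X = - (a - b' + (b - a) + \<tau>)"
  define Y where "Y = - (a - b' + \<tau>)"
  have X: "X > 0" "X > a' - b" using t gap unfolding X_def by auto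
  have XY: "X < Y" "Y = X + (b - a)" "Y < b' - a" using t ab unfolding X_def Y_def by auto
  obtain z where z: "X < z" "z < Y" "Y powr (r - 1) - X powr (r - 1) = (Y - X) * ((r - 1) * z powr (r - 1 - 1))"
    using mvt_powr[OF X(1) XY(1)] by blast
  have fdX: "fd r (a - b' + (b - a) + \<tau>) = - r * X powr (r - 1)"
    unfolding fd_def X_def using X(1) unfolding X_def by (simp add: sgn_if)
  have fdY: "fd r (a - b' + \<tau>) = - r * Y powr (r - 1)"
    unfolding fd_def Y_def using X(1) XY(1) unfolding X_def Y_def by (simp add: sgn_if)
  have "- DD (pw r) a b a' b' = (b' - a') * r * (Y powr (r - 1) - X powr (r - 1))"
    unfolding t(3) fdX fdY by (simp add: algebra_simps)
  also have "\<dots> = r * (r - 1) * ((b - a) * (b' - a')) * z powr (r - 2)"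
  proof -
    have e: "r - 1 - 1 = r - 2" by simp
    have d: "Y - X = b - a" using XY(2) by simp
    show ?thesis unfolding z(3) d e by (simp add: algebra_simps)
  qed
  finally show ?thesis using z X XY by (intro exI[of _ z]) auto
qed



definition Acell :: "real \<Rightarrow> real \<Rightarrow> real \<Rightarrow> real \<Rightarrow> real \<Rightarrow> real" where
  "Acell \<gamma> a b a' b' = R \<gamma> b b' - R \<gamma> b a' - R \<gamma> a b' + R \<gamma> a a'"
definition Tcell :: "real \<Rightarrow> real \<Rightarrow> real \<Rightarrow> real \<Rightarrow> real \<Rightarrow> real" where
  "Tcell p a b a' b' = - DD (pw (p + 2)) a b a' b' / ((p + 1) * (p + 2))"
definition ecell :: "nat \<Rightarrow> real \<Rightarrow> real \<Rightarrow> real \<Rightarrow> real \<Rightarrow> real \<Rightarrow> real" where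
  "ecell q \<gamma> a b a' b' = (1 / ((b - a) * (b' - a'))) ^ (q - 1) * Acell \<gamma> a b a' b' ^ q
      - (\<gamma> * (2 * \<gamma> - 1)) ^ q * Tcell (q * (2 * \<gamma> - 2)) a b a' b'"

lemma Acell_DD: "Acell \<gamma> a b a' b' = - DD (pw (2 * \<gamma>)) a b a' b' / 2"
  unfolding Acell_def DD_def R_def pw_def by (simp add: abs_minus_commute field_simps)

lemma ecell_swap: "ecell q \<gamma> a b a' b' = ecell q \<gamma> a' b' a b"
  unfolding ecell_def Acell_DD Tcell_def DD_swap[of _ a b a' b'] by (simp add: mult.commute)

lemma scale_pow:
  fixes H x :: real and q :: nat
  assumes "H > 0" "q \<ge> 1"
  shows "(1 / H) ^ (q - 1) * (H ^ q * x) = H * x"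
proof -
  have "H ^ q = H ^ (q - 1) * H" using assms by (metis Suc_diff_le diff_Suc_1 mult.commute power_Suc)
  then show ?thesis using assms by (simp add: power_one_over field_simps)
qed

lemma e_far:
  fixes q :: nat and \<gamma> p a b a' b' :: real
  assumes q: "q \<ge> 1" and g: "1/2 < \<gamma>" "\<gamma> < 1" and p: "p = q * (2 * \<gamma> - 2)" "-1 < p"
    and ab: "a < b" and gap: "b < a'" and ab': "a' < b'"
  shows "\<bar>ecell q \<gamma> a b a' b'\<bar> \<le> (\<gamma> * (2 * \<gamma> - 1)) ^ q * ((b - a) * (b' - a'))
            * ((b - a) + (b' - a')) * (- p) * (a' - b) powr (p - 1)"
proof -
  define H where "H = (b - a) * (b' - a')"
  define c where "c = \<gamma> * (2 * \<gamma> - 1)"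
  have H: "H > 0" using ab ab' unfolding H_def by simp
  have c: "c > 0" using g unfolding c_def by simp
  have pneg: "p < 0" using p g q by (simp add: mult_pos_neg)
  obtain z1 where z1: "a' - b < z1" "z1 < b' - a"
    "- DD (pw (2*\<gamma>)) a b a' b' = (2*\<gamma>) * (2*\<gamma> - 1) * H * z1 powr (2*\<gamma> - 2)"
    using DD_far[of "2*\<gamma>" a b a' b'] g ab gap ab' unfolding H_def by auto
  obtain z2 where z2: "a' - b < z2" "z2 < b' - a"
    "- DD (pw (p+2)) a b a' b' = (p+2) * (p + 2 - 1) * H * z2 powr (p + 2 - 2)"
    using DD_far[of "p+2" a b a' b'] p ab gap ab' unfolding H_def by auto
  have z1pos: "z1 > 0" and z2pos: "z2 > 0" using z1 z2 gap by auto
  have A: "Acell \<gamma> a b a' b' = c * H * z1 powr (2*\<gamma> - 2)"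
    unfolding Acell_DD c_def using z1(3) by (simp add: field_simps)
  have Aq: "Acell \<gamma> a b a' b' ^ q = H ^ q * (c ^ q * z1 powr p)"
    unfolding A using z1pos p by (simp add: power_mult_distrib powr_power)
  have T: "Tcell p a b a' b' = H * z2 powr p"
  proof -
    have e1: "p + 2 - 2 = p" "p + 2 - 1 = p + 1" by simp_all
    have "(p + 1) * (p + 2) \<noteq> 0" using p(2) by simp
    then show ?thesis unfolding Tcell_def using z2(3) unfolding e1 by (simp add: field_simps)
  qed
  have e: "ecell q \<gamma> a b a' b' = c ^ q * H * (z1 powr p - z2 powr p)"
    unfolding ecell_def H_def[symmetric] c_def[symmetric] Aq T p(1)[symmetric]
    using scale_pow[OF H q, of "c ^ q * z1 powr p"] by (simp add: algebra_simps)
  define d where "d = a' - b"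
  define s where "s = (b - a) + (b' - a')"
  have d: "d > 0" and s: "s > 0" using gap ab ab' unfolding d_def s_def by auto
  have ds: "b' - a = d + s" unfolding d_def s_def by simp
  have bnd: "\<bar>z1 powr p - z2 powr p\<bar> \<le> d powr p - (d + s) powr p"
  proof -
    have "z1 powr p \<le> d powr p" "z2 powr p \<le> d powr p"
      using z1 z2 d pneg unfolding d_def by (auto intro!: powr_mono2')
    moreover have "(d + s) powr p \<le> z1 powr p" "(d + s) powr p \<le> z2 powr p"
      using z1 z2 z1pos z2pos pneg ds by (auto intro!: powr_mono2')
    ultimately show ?thesis by linarith
  qed
  obtain \<xi> where xi: "d < \<xi>" "\<xi> < d + s" "(d + s) powr p - d powr p = (d + s - d) * (p * \<xi> powr (p - 1))"
    using mvt_powr[of d "d + s" p] d s by auto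
  have "\<xi> powr (p - 1) \<le> d powr (p - 1)" using xi d pneg by (intro powr_mono2') auto
  then have "d powr p - (d + s) powr p \<le> s * (- p) * d powr (p - 1)"
    using xi(3) s pneg by (simp add: algebra_simps)
  with bnd have "\<bar>z1 powr p - z2 powr p\<bar> \<le> s * (- p) * d powr (p - 1)" by linarith
  then have "\<bar>ecell q \<gamma> a b a' b'\<bar> \<le> c ^ q * H * (s * (- p) * d powr (p - 1))"
  proof -
    have "\<bar>ecell q \<gamma> a b a' b'\<bar> = c ^ q * H * \<bar>z1 powr p - z2 powr p\<bar>"
      unfolding e using c H by (simp add: abs_mult)
    also have "\<dots> \<le> c ^ q * H * (s * (- p) * d powr (p - 1))"
      using c H \<open>\<bar>z1 powr p - z2 powr p\<bar> \<le> s * (- p) * d powr (p - 1)\<close>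
      by (intro mult_left_mono) auto
    finally show ?thesis .
  qed
  then show ?thesis unfolding c_def H_def s_def d_def by (simp add: algebra_simps)
qed

lemma e_near:
  fixes q :: nat and \<gamma> p a b a' b' :: real
  assumes q: "q \<ge> 1" and g: "1/2 < \<gamma>" "\<gamma> < 1" and p: "p = q * (2 * \<gamma> - 2)" "-1 < p"
    and ab: "a < b" and ab': "a' < b'"
  shows "\<bar>ecell q \<gamma> a b a' b'\<bar> \<le> ((b - a) * (b' - a')) * (max (b - a) (b' - a')) powr p
            * ((2 * \<gamma>) ^ q + 2 * (\<gamma> * (2 * \<gamma> - 1)) ^ q / (p + 1))"
proof -
  define H where "H = (b - a) * (b' - a')"
  define c where "c = \<gamma> * (2 * \<gamma> - 1)"
  define m where "m = max (b - a) (b' - a')"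
  have H: "H > 0" using ab ab' unfolding H_def by simp
  have c: "c > 0" using g unfolding c_def by simp
  have m: "m > 0" using ab unfolding m_def by auto
  have pneg: "p < 0" using p g q by (simp add: mult_pos_neg)
  have A: "\<bar>Acell \<gamma> a b a' b'\<bar> \<le> 2 * \<gamma> * H * m powr (2 * \<gamma> - 2)"
    using DD_crude[of "2*\<gamma>" a b a' b'] g ab ab' unfolding Acell_DD H_def m_def by simp
  have "\<bar>Acell \<gamma> a b a' b'\<bar> ^ q \<le> (2 * \<gamma> * H * m powr (2 * \<gamma> - 2)) ^ q"
    by (intro power_mono A) simp
  also have "\<dots> = H ^ q * ((2 * \<gamma>) ^ q * m powr p)"
    using m p by (simp add: power_mult_distrib powr_power)
  finally have Aq: "\<bar>Acell \<gamma> a b a' b'\<bar> ^ q \<le> H ^ q * ((2 * \<gamma>) ^ q * m powr p)" .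
  have t1: "\<bar>(1 / H) ^ (q - 1) * Acell \<gamma> a b a' b' ^ q\<bar> \<le> H * ((2 * \<gamma>) ^ q * m powr p)"
  proof -
    have "\<bar>(1 / H) ^ (q - 1) * Acell \<gamma> a b a' b' ^ q\<bar> = (1 / H) ^ (q - 1) * \<bar>Acell \<gamma> a b a' b'\<bar> ^ q"
      using H by (simp add: abs_mult power_abs)
    also have "\<dots> \<le> (1 / H) ^ (q - 1) * (H ^ q * ((2 * \<gamma>) ^ q * m powr p))"
      using Aq H by (intro mult_left_mono) auto
    also have "\<dots> = H * ((2 * \<gamma>) ^ q * m powr p)" by (rule scale_pow[OF H q])
    finally show ?thesis .
  qed
  have T: "\<bar>Tcell p a b a' b'\<bar> \<le> 2 * H * m powr p / (p + 1)"
  proof -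
    have "\<bar>DD (pw (p + 2)) a b a' b'\<bar> \<le> 2 * (p + 2) * H * m powr (p + 2 - 2)"
      using DD_crude[of "p+2" a b a' b'] p pneg ab ab' unfolding H_def m_def by simp
    then have "\<bar>DD (pw (p + 2)) a b a' b'\<bar> \<le> 2 * (p + 2) * H * m powr p" by simp
    moreover have pp: "(p + 1) * (p + 2) > 0" using p(2) by simp
    ultimately have "\<bar>DD (pw (p + 2)) a b a' b'\<bar> / ((p + 1) * (p + 2)) \<le> 2 * (p + 2) * H * m powr p / ((p + 1) * (p + 2))"
      by (intro divide_right_mono) auto
    also have "\<dots> = 2 * H * m powr p / (p + 1)"
    proof -
      have nz: "p + 2 \<noteq> 0" using p(2) by auto
      have "2 * (p + 2) * H * m powr p = (2 * H * m powr p) * (p + 2)" by (simp add: algebra_simps)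
      then show ?thesis using nonzero_mult_divide_mult_cancel_right[OF nz, of "2 * H * m powr p" "p + 1"]
        by (simp only:)
    qed
    finally show ?thesis unfolding Tcell_def using pp by (simp add: abs_divide)
  qed
  have "\<bar>ecell q \<gamma> a b a' b'\<bar> \<le> \<bar>(1 / H) ^ (q - 1) * Acell \<gamma> a b a' b' ^ q\<bar> + c ^ q * \<bar>Tcell p a b a' b'\<bar>"
    unfolding ecell_def H_def[symmetric] c_def[symmetric] p(1)[symmetric] using c
    using abs_triangle_ineq4[of "(1 / H) ^ (q - 1) * Acell \<gamma> a b a' b' ^ q" "c ^ q * Tcell p a b a' b'"]
    by (simp add: abs_mult)
  also have "\<dots> \<le> H * ((2 * \<gamma>) ^ q * m powr p) + c ^ q * (2 * H * m powr p / (p + 1))"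
    using t1 T c by (intro add_mono mult_left_mono) auto
  finally show ?thesis unfolding H_def[symmetric] m_def[symmetric] c_def[symmetric]
    by (simp add: field_simps)
qed



lemma tele_sum:
  fixes hs d0 p :: real
  assumes hs: "hs > 0" and d0: "d0 > 0" and p: "p < 0"
  shows "(\<Sum>j<n. hs * (d0 + real (Suc j) * hs) powr (p - 1)) \<le> (d0 powr p - (d0 + real n * hs) powr p) / (- p)"
proof (induction n)
  case 0
  then show ?case by simp
next
  case (Suc n)
  define x where "x = d0 + real n * hs"
  have x: "x > 0" using hs d0 unfolding x_def by (simp add: add_pos_nonneg)
  obtain \<xi> where xi: "x < \<xi>" "\<xi> < x + hs" "(x + hs) powr p - x powr p = (x + hs - x) * (p * \<xi> powr (p - 1))"
    using mvt_powr[of x "x + hs" p] x hs by auto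
  have "(x + hs) powr (p - 1) \<le> \<xi> powr (p - 1)" using xi x p by (intro powr_mono2') auto
  then have "hs * (x + hs) powr (p - 1) \<le> hs * \<xi> powr (p - 1)" using hs by simp
  also have "\<dots> = (x powr p - (x + hs) powr p) / (- p)" using xi(3) p by (simp add: field_simps)
  finally have step: "hs * (x + hs) powr (p - 1) \<le> (x powr p - (x + hs) powr p) / (- p)" .
  have e: "d0 + real (Suc n) * hs = x + hs" unfolding x_def by (simp add: algebra_simps)
  have "(\<Sum>j<Suc n. hs * (d0 + real (Suc j) * hs) powr (p - 1))
      = (\<Sum>j<n. hs * (d0 + real (Suc j) * hs) powr (p - 1)) + hs * (x + hs) powr (p - 1)"
    using e by simp
  also have "\<dots> \<le> (d0 powr p - x powr p) / (- p) + (x powr p - (x + hs) powr p) / (- p)"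
    using Suc.IH step unfolding x_def by (intro add_mono) auto
  also have "\<dots> = (d0 powr p - (d0 + real (Suc n) * hs) powr p) / (- p)"
    unfolding e using p by (simp add: field_simps)
  finally show ?case .
qed

lemma row_sum0:
  fixes hs d0 m p :: real
  assumes hs: "hs > 0" "hs \<le> m" and m: "m > 0" and d0: "d0 \<ge> m" and p: "p < 0"
  shows "(\<Sum>j<n. hs * (d0 + real j * hs) powr (p - 1)) \<le> m powr p * (1 + 1 / (- p))"
proof (cases n)
  case 0
  then show ?thesis using p by simp
next
  case (Suc k)
  have d0p: "d0 > 0" using d0 m by simp
  have "(\<Sum>j<n. hs * (d0 + real j * hs) powr (p - 1))
      = hs * d0 powr (p - 1) + (\<Sum>j<k. hs * (d0 + real (Suc j) * hs) powr (p - 1))"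
    unfolding Suc sum.lessThan_Suc_shift by simp
  also have "\<dots> \<le> m * m powr (p - 1) + (d0 powr p - (d0 + real k * hs) powr p) / (- p)"
  proof (intro add_mono tele_sum hs d0p p)
    have "d0 powr (p - 1) \<le> m powr (p - 1)" using d0 m p by (intro powr_mono2') auto
    then show "hs * d0 powr (p - 1) \<le> m * m powr (p - 1)"
      using hs by (intro mult_mono) auto
  qed
  also have "\<dots> \<le> m powr p + m powr p / (- p)"
  proof (intro add_mono)
    show "m * m powr (p - 1) \<le> m powr p" using m by (simp add: powr_diff)
    have "d0 powr p \<le> m powr p" using d0 m p by (intro powr_mono2') auto
    moreover have "(d0 + real k * hs) powr p \<ge> 0" by simp
    ultimately have "d0 powr p - (d0 + real k * hs) powr p \<le> m powr p" by linarith
    then show "(d0 powr p - (d0 + real k * hs) powr p) / (- p) \<le> m powr p / (- p)"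
      using p by (intro divide_right_mono) auto
  qed
  also have "\<dots> = m powr p * (1 + 1 / (- p))" by (simp add: field_simps)
  finally show ?thesis .
qed

lemma row_sum:
  fixes hs m z0 p :: real and S :: "nat set"
  assumes hs: "hs > 0" "hs \<le> m" and m: "m > 0" and p: "p < 0" and S: "finite S"
    and far: "\<And>k. k \<in> S \<Longrightarrow> real k * hs - z0 \<ge> m"
  shows "(\<Sum>k\<in>S. hs * (real k * hs - z0) powr (p - 1)) \<le> m powr p * (1 + 1 / (- p))"
proof (cases "S = {}")
  case True
  then show ?thesis using p m by simp
next
  case False
  define k0 where "k0 = Min S"
  define k1 where "k1 = Max S"
  have k0: "k0 \<in> S" and k1: "k1 \<in> S" using S False unfolding k0_def k1_def by auto
  have sub: "S \<subseteq> {k0..k1}" using S unfolding k0_def k1_def by auto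
  have "(\<Sum>k\<in>S. hs * (real k * hs - z0) powr (p - 1)) \<le> (\<Sum>k\<in>{k0..k1}. hs * (real k * hs - z0) powr (p - 1))"
    using sub hs by (intro sum_mono2) auto
  also have "\<dots> = (\<Sum>j\<in>{0..k1 - k0}. hs * (real (j + k0) * hs - z0) powr (p - 1))"
  proof -
    have "k1 - k0 + k0 = k1" using sub k1 by auto
    then have "{k0..k1} = {0 + k0..(k1 - k0) + k0}" by simp
    then show ?thesis by (simp only: sum.shift_bounds_cl_nat_ivl)
  qed
  also have "\<dots> = (\<Sum>j<Suc (k1 - k0). hs * ((real k0 * hs - z0) + real j * hs) powr (p - 1))"
    by (intro sum.cong) (auto simp: algebra_simps)
  also have "\<dots> \<le> m powr p * (1 + 1 / (- p))"
    using far[OF k0] by (intro row_sum0 hs m p) auto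
  finally show ?thesis .
qed

lemma count_sum:
  fixes hs lo hi :: real and S :: "nat set"
  assumes hs: "hs > 0" and S: "finite S" and lohi: "lo \<le> hi"
    and inside: "\<And>k. k \<in> S \<Longrightarrow> lo < real k * hs \<and> real k * hs < hi"
  shows "hs * card S \<le> hi - lo + hs"
proof (cases "S = {}")
  case True
  then show ?thesis using lohi hs by simp
next
  case False
  define k0 where "k0 = Min S"
  define k1 where "k1 = Max S"
  have k0: "k0 \<in> S" and k1: "k1 \<in> S" using S False unfolding k0_def k1_def by auto
  have sub: "S \<subseteq> {k0..k1}" using S unfolding k0_def k1_def by auto
  have le: "k0 \<le> k1" using sub k1 by auto
  have "card S \<le> card {k0..k1}" using sub by (intro card_mono) auto
  then have "real (card S) \<le> real (k1 - k0) + 1" using le by simp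
  then have "hs * card S \<le> hs * (real (k1 - k0) + 1)" using hs by (intro mult_left_mono) auto
  also have "\<dots> = real k1 * hs - real k0 * hs + hs" using le by (simp add: of_nat_diff algebra_simps)
  also have "\<dots> \<le> hi - lo + hs" using inside[OF k0] inside[OF k1] by simp
  finally show ?thesis .
qed



lemma cell_bound:
  fixes q :: nat and \<gamma> p h h' m :: real and i i' :: nat
  assumes q: "q \<ge> 1" and g: "1/2 < \<gamma>" "\<gamma> < 1" and p: "p = q * (2 * \<gamma> - 2)" "-1 < p"
    and h: "h > 0" "h' > 0" and m: "m = max h h'"
  defines "c \<equiv> \<gamma> * (2 * \<gamma> - 1)"
  defines "C3 \<equiv> (2 * \<gamma>) ^ q + 2 * c ^ q / (p + 1)"
  defines "dR \<equiv> real i' * h' - real (Suc i) * h"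
  defines "dL \<equiv> real i * h - real (Suc i') * h'"
  shows "\<bar>ecell q \<gamma> (real i * h) (real (Suc i) * h) (real i' * h') (real (Suc i') * h')\<bar>
     \<le> (if dR \<ge> m then c ^ q * (h * h') * (2 * m) * (- p) * dR powr (p - 1) else 0)
      + (if dL \<ge> m then c ^ q * (h' * h) * (2 * m) * (- p) * dL powr (p - 1) else 0)
      + (if dR < m \<and> dL < m then (h * h') * m powr p * C3 else 0)"
proof -
  have c: "c > 0" using g unfolding c_def by simp
  have pneg: "p < 0" using p g q by (simp add: mult_pos_neg)
  have hh: "real (Suc i) * h - real i * h = h" "real (Suc i') * h' - real i' * h' = h'"
    by (simp_all add: algebra_simps)
  have lt: "real i * h < real (Suc i) * h" "real i' * h' < real (Suc i') * h'"
    using h by simp_all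
  have C3: "C3 \<ge> 0" unfolding C3_def using c p g by (intro add_nonneg_nonneg divide_nonneg_pos) auto
  have mp: "m > 0" using h m by auto
  have nn1: "0 \<le> (if dR \<ge> m then c ^ q * (h * h') * (2 * m) * (- p) * dR powr (p - 1) else 0)"
  proof -
    have "0 \<le> c ^ q * (h * h') * (2 * m) * (- p) * dR powr (p - 1)" using c h mp pneg by (intro mult_nonneg_nonneg) auto
    then show ?thesis by simp
  qed
  have nn2: "0 \<le> (if dL \<ge> m then c ^ q * (h' * h) * (2 * m) * (- p) * dL powr (p - 1) else 0)"
  proof -
    have "0 \<le> c ^ q * (h' * h) * (2 * m) * (- p) * dL powr (p - 1)" using c h mp pneg by (intro mult_nonneg_nonneg) auto
    then show ?thesis by simp
  qed
  have nn3: "0 \<le> (if dR < m \<and> dL < m then (h * h') * m powr p * C3 else 0)"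
    using h C3 by auto
  show ?thesis
  proof (cases "dR \<ge> m")
    case True
    have gap: "real (Suc i) * h < real i' * h'" using True mp unfolding dR_def by simp
    have "\<bar>ecell q \<gamma> (real i * h) (real (Suc i) * h) (real i' * h') (real (Suc i') * h')\<bar>
       \<le> c ^ q * (h * h') * (h + h') * (- p) * dR powr (p - 1)"
      using e_far[OF q g p lt(1) gap lt(2)] unfolding hh c_def dR_def by simp
    also have "\<dots> \<le> c ^ q * (h * h') * (2 * m) * (- p) * dR powr (p - 1)"
      using c h pneg m by (intro mult_right_mono mult_left_mono) auto
    finally show ?thesis using True nn2 nn3 by simp
  next
    case F1: False
    show ?thesis
    proof (cases "dL \<ge> m")
      case True
      have gap: "real (Suc i') * h' < real i * h" using True mp unfolding dL_def by simp
      have "\<bar>ecell q \<gamma> (real i * h) (real (Suc i) * h) (real i' * h') (real (Suc i') * h')\<bar>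
         \<le> c ^ q * (h' * h) * (h' + h) * (- p) * dL powr (p - 1)"
        using e_far[OF q g p lt(2) gap lt(1)] unfolding ecell_swap[of q \<gamma> "real i * h"] hh c_def dL_def
        by simp
      also have "\<dots> \<le> c ^ q * (h' * h) * (2 * m) * (- p) * dL powr (p - 1)"
        using c h pneg m by (intro mult_right_mono mult_left_mono) auto
      finally show ?thesis using True nn1 nn3 F1 by simp
    next
      case False
      have "\<bar>ecell q \<gamma> (real i * h) (real (Suc i) * h) (real i' * h') (real (Suc i') * h')\<bar>
         \<le> (h * h') * m powr p * C3"
        using e_near[OF q g p lt(1) lt(2)] unfolding hh C3_def c_def m by simp
      then show ?thesis using False F1 by simp
    qed
  qed
qed



lemma sum_h_le:
  fixes h K :: real and I :: nat
  assumes "real (Suc I) * h \<le> 1" "K \<ge> 0" "h > 0"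
  shows "(\<Sum>i\<in>{0..I}. h * K) \<le> K"
proof -
  have "(\<Sum>i\<in>{0..I}. h * K) = (real (Suc I) * h) * K" by simp
  also have "\<dots> \<le> 1 * K" using assms by (intro mult_right_mono) auto
  finally show ?thesis by simp
qed

lemma grid_err:
  fixes q :: nat and \<gamma> p h h' m :: real and I I' :: nat
  assumes q: "q \<ge> 1" and g: "1/2 < \<gamma>" "\<gamma> < 1" and p: "p = q * (2 * \<gamma> - 2)" "-1 < p"
    and h: "h > 0" "h' > 0" and m: "m = max h h'"
    and I: "real (Suc I) * h \<le> 1" and I': "real (Suc I') * h' \<le> 1"
  shows "\<bar>\<Sum>i\<in>{0..I}. \<Sum>i'\<in>{0..I'}. ecell q \<gamma> (real i * h) (real (Suc i) * h) (real i' * h') (real (Suc i') * h')\<bar>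
     \<le> (4 * (\<gamma> * (2 * \<gamma> - 1)) ^ q * (1 - p) + 5 * ((2 * \<gamma>) ^ q + 2 * (\<gamma> * (2 * \<gamma> - 1)) ^ q / (p + 1)))
        * m powr (p + 1)"
proof -
  define c where "c = \<gamma> * (2 * \<gamma> - 1)"
  define C3 where "C3 = (2 * \<gamma>) ^ q + 2 * c ^ q / (p + 1)"
  define dR where "dR i i' = real i' * h' - real (Suc i) * h" for i i' :: nat
  define dL where "dL i i' = real i * h - real (Suc i') * h'" for i i' :: nat
  define B1 where "B1 i i' = (if dR i i' \<ge> m then c ^ q * (h * h') * (2 * m) * (- p) * dR i i' powr (p - 1) else 0)" for i i'
  define B2 where "B2 i i' = (if dL i i' \<ge> m then c ^ q * (h' * h) * (2 * m) * (- p) * dL i i' powr (p - 1) else 0)" for i i'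
  define B3 where "B3 i i' = (if dR i i' < m \<and> dL i i' < m then (h * h') * m powr p * C3 else 0)" for i i'
  define W where "W = m powr (p + 1)"
  have c: "c > 0" using g unfolding c_def by simp
  have pneg: "p < 0" using p g q by (simp add: mult_pos_neg)
  have mp: "m > 0" using h m by auto
  have C3: "C3 \<ge> 0" unfolding C3_def using c p g by (intro add_nonneg_nonneg divide_nonneg_pos) auto
  have W: "m * m powr p = W" unfolding W_def using mp by (simp add: powr_add)
  have Wn: "W \<ge> 0" unfolding W_def by simp
  have cell: "\<bar>ecell q \<gamma> (real i * h) (real (Suc i) * h) (real i' * h') (real (Suc i') * h')\<bar>
      \<le> B1 i i' + B2 i i' + B3 i i'" for i i'
    unfolding B1_def B2_def B3_def dR_def dL_def c_def C3_def
    by (rule cell_bound[OF q g p h m])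
  have S1: "(\<Sum>i\<in>{0..I}. \<Sum>i'\<in>{0..I'}. B1 i i') \<le> 2 * c ^ q * (1 - p) * W"
  proof -
    have row: "(\<Sum>i'\<in>{0..I'}. B1 i i') \<le> h * (2 * c ^ q * (1 - p) * W)" for i
    proof -
      have "(\<Sum>i'\<in>{0..I'}. B1 i i')
          = c ^ q * h * (2 * m) * (- p) * (\<Sum>i'\<in>{0..I'}. if dR i i' \<ge> m then h' * dR i i' powr (p - 1) else 0)"
        unfolding B1_def sum_distrib_left by (intro sum.cong) auto
      also have "\<dots> = c ^ q * h * (2 * m) * (- p) * (\<Sum>i'\<in>{x\<in>{0..I'}. dR i x \<ge> m}. h' * dR i i' powr (p - 1))"
        by (simp only: sum.inter_filter[OF finite_atLeastAtMost])
      also have "\<dots> \<le> c ^ q * h * (2 * m) * (- p) * (m powr p * (1 + 1 / (- p)))"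
      proof (intro mult_left_mono)
        show "(\<Sum>i'\<in>{x\<in>{0..I'}. dR i x \<ge> m}. h' * dR i i' powr (p - 1)) \<le> m powr p * (1 + 1 / (- p))"
          unfolding dR_def
          by (rule row_sum[of h' m p _ "real (Suc i) * h"]) (use h m mp pneg in auto)
        show "0 \<le> c ^ q * h * (2 * m) * - p" using c h mp pneg by (intro mult_nonneg_nonneg) auto
      qed
      also have "\<dots> = h * (2 * c ^ q * (1 - p) * W)"
        unfolding W[symmetric] using pneg by (simp add: field_simps)
      finally show ?thesis .
    qed
    have "(\<Sum>i\<in>{0..I}. \<Sum>i'\<in>{0..I'}. B1 i i') \<le> (\<Sum>i\<in>{0..I}. h * (2 * c ^ q * (1 - p) * W))"
      by (intro sum_mono row)
    also have "\<dots> \<le> 2 * c ^ q * (1 - p) * W"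
      using I h c pneg Wn by (intro sum_h_le) auto
    finally show ?thesis .
  qed
  have S2: "(\<Sum>i\<in>{0..I}. \<Sum>i'\<in>{0..I'}. B2 i i') \<le> 2 * c ^ q * (1 - p) * W"
  proof -
    have row: "(\<Sum>i\<in>{0..I}. B2 i i') \<le> h' * (2 * c ^ q * (1 - p) * W)" for i'
    proof -
      have "(\<Sum>i\<in>{0..I}. B2 i i')
          = c ^ q * h' * (2 * m) * (- p) * (\<Sum>i\<in>{0..I}. if dL i i' \<ge> m then h * dL i i' powr (p - 1) else 0)"
        unfolding B2_def sum_distrib_left by (intro sum.cong) auto
      also have "\<dots> = c ^ q * h' * (2 * m) * (- p) * (\<Sum>i\<in>{x\<in>{0..I}. dL x i' \<ge> m}. h * dL i i' powr (p - 1))"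
        by (simp only: sum.inter_filter[OF finite_atLeastAtMost])
      also have "\<dots> \<le> c ^ q * h' * (2 * m) * (- p) * (m powr p * (1 + 1 / (- p)))"
      proof (intro mult_left_mono)
        show "(\<Sum>i\<in>{x\<in>{0..I}. dL x i' \<ge> m}. h * dL i i' powr (p - 1)) \<le> m powr p * (1 + 1 / (- p))"
          unfolding dL_def
          by (rule row_sum[of h m p _ "real (Suc i') * h'"]) (use h m mp pneg in auto)
        show "0 \<le> c ^ q * h' * (2 * m) * - p" using c h mp pneg by (intro mult_nonneg_nonneg) auto
      qed
      also have "\<dots> = h' * (2 * c ^ q * (1 - p) * W)"
        unfolding W[symmetric] using pneg by (simp add: field_simps)
      finally show ?thesis .
    qed
    have "(\<Sum>i\<in>{0..I}. \<Sum>i'\<in>{0..I'}. B2 i i') = (\<Sum>i'\<in>{0..I'}. \<Sum>i\<in>{0..I}. B2 i i')"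
      by (rule sum.swap)
    also have "\<dots> \<le> (\<Sum>i'\<in>{0..I'}. h' * (2 * c ^ q * (1 - p) * W))"
      by (intro sum_mono row)
    also have "\<dots> \<le> 2 * c ^ q * (1 - p) * W"
      using I' h c pneg Wn by (intro sum_h_le) auto
    finally show ?thesis .
  qed
  have S3: "(\<Sum>i\<in>{0..I}. \<Sum>i'\<in>{0..I'}. B3 i i') \<le> 5 * C3 * W"
  proof -
    have row: "(\<Sum>i'\<in>{0..I'}. B3 i i') \<le> h * (5 * C3 * W)" for i
    proof -
      define S where "S = {x\<in>{0..I'}. dR i x < m \<and> dL i x < m}"
      have "(\<Sum>i'\<in>{0..I'}. B3 i i') = (\<Sum>i'\<in>S. (h * h') * m powr p * C3)"
        unfolding B3_def S_def by (simp only: sum.inter_filter[OF finite_atLeastAtMost])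
      also have "\<dots> = h * m powr p * C3 * (h' * card S)" by (simp add: algebra_simps)
      also have "\<dots> \<le> h * m powr p * C3 * ((real (Suc i) * h + m) - (real i * h - h' - m) + h')"
      proof (intro mult_left_mono count_sum)
        show "finite S" unfolding S_def by simp
        show "real i * h - h' - m \<le> real (Suc i) * h + m" using h mp by (simp add: algebra_simps)
        show "real i * h - h' - m < real k * h' \<and> real k * h' < real (Suc i) * h + m" if "k \<in> S" for k
          using that unfolding S_def dR_def dL_def by (auto simp: algebra_simps)
        show "0 \<le> h * m powr p * C3" using h C3 by simp
      qed (use h in auto)
      also have "\<dots> \<le> h * m powr p * C3 * (5 * m)"
        using h C3 m by (intro mult_left_mono) (auto simp: algebra_simps)
      also have "\<dots> = h * (5 * C3 * W)" unfolding W[symmetric] by (simp add: algebra_simps)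
      finally show ?thesis .
    qed
    have "(\<Sum>i\<in>{0..I}. \<Sum>i'\<in>{0..I'}. B3 i i') \<le> (\<Sum>i\<in>{0..I}. h * (5 * C3 * W))"
      by (intro sum_mono row)
    also have "\<dots> \<le> 5 * C3 * W"
      using I h C3 Wn by (intro sum_h_le) auto
    finally show ?thesis .
  qed
  have "\<bar>\<Sum>i\<in>{0..I}. \<Sum>i'\<in>{0..I'}. ecell q \<gamma> (real i * h) (real (Suc i) * h) (real i' * h') (real (Suc i') * h')\<bar>
      \<le> (\<Sum>i\<in>{0..I}. \<Sum>i'\<in>{0..I'}. B1 i i' + B2 i i' + B3 i i')"
    by (rule order_trans[OF sum_abs]) (intro sum_mono order_trans[OF sum_abs] cell)
  also have "\<dots> = (\<Sum>i\<in>{0..I}. \<Sum>i'\<in>{0..I'}. B1 i i') + (\<Sum>i\<in>{0..I}. \<Sum>i'\<in>{0..I'}. B2 i i')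
       + (\<Sum>i\<in>{0..I}. \<Sum>i'\<in>{0..I'}. B3 i i')"
    by (simp add: sum.distrib)
  also have "\<dots> \<le> 2 * c ^ q * (1 - p) * W + 2 * c ^ q * (1 - p) * W + 5 * C3 * W"
    using S1 S2 S3 by linarith
  also have "\<dots> = (4 * c ^ q * (1 - p) + 5 * C3) * W" by (simp add: algebra_simps)
  finally show ?thesis unfolding c_def C3_def W_def .
qed



lemma DD_tele:
  fixes f :: "real \<Rightarrow> real" and x y :: "nat \<Rightarrow> real"
  shows "(\<Sum>i\<in>{0..I}. \<Sum>i'\<in>{0..I'}. DD f (x i) (x (Suc i)) (y i') (y (Suc i')))
       = DD f (x 0) (x (Suc I)) (y 0) (y (Suc I'))"
proof -
  define G where "G u = f (u - y (Suc I')) - f (u - y 0)" for u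
  have inner: "(\<Sum>i'\<in>{0..I'}. DD f a b (y i') (y (Suc i'))) = G b - G a" for a b
  proof -
    have "(\<Sum>i'\<in>{0..I'}. DD f a b (y i') (y (Suc i')))
        = (\<Sum>i'\<in>{0..I'}. (\<lambda>k. f (b - y k) - f (a - y k)) (Suc i') - (\<lambda>k. f (b - y k) - f (a - y k)) i')"
      unfolding DD_def by (intro sum.cong) (auto simp: algebra_simps)
    also have "\<dots> = G b - G a" by (subst sum_Suc_diff) (auto simp: G_def algebra_simps)
    finally show ?thesis .
  qed
  have "(\<Sum>i\<in>{0..I}. \<Sum>i'\<in>{0..I'}. DD f (x i) (x (Suc i)) (y i') (y (Suc i')))
      = (\<Sum>i\<in>{0..I}. (G \<circ> x) (Suc i) - (G \<circ> x) i)"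
    by (simp add: inner)
  also have "\<dots> = G (x (Suc I)) - G (x 0)" by (subst sum_Suc_diff) auto
  also have "\<dots> = DD f (x 0) (x (Suc I)) (y 0) (y (Suc I'))"
    unfolding G_def DD_def by (simp add: algebra_simps)
  finally show ?thesis .
qed

lemma Tcell_tele:
  fixes x y :: "nat \<Rightarrow> real"
  shows "(\<Sum>i\<in>{0..I}. \<Sum>i'\<in>{0..I'}. Tcell p (x i) (x (Suc i)) (y i') (y (Suc i')))
       = Tcell p (x 0) (x (Suc I)) (y 0) (y (Suc I'))"
proof -
  have "(\<Sum>i\<in>{0..I}. \<Sum>i'\<in>{0..I'}. Tcell p (x i) (x (Suc i)) (y i') (y (Suc i')))
      = - (\<Sum>i\<in>{0..I}. \<Sum>i'\<in>{0..I'}. DD (pw (p + 2)) (x i) (x (Suc i)) (y i') (y (Suc i'))) / ((p + 1) * (p + 2))"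
    unfolding Tcell_def by (simp add: sum_divide_distrib sum_negf)
  also have "\<dots> = Tcell p (x 0) (x (Suc I)) (y 0) (y (Suc I'))"
    unfolding DD_tele Tcell_def ..
  finally show ?thesis .
qed

lemma Tcell_R:
  fixes X Y p :: real
  assumes "X \<ge> 0" "Y \<ge> 0"
  shows "Tcell p 0 X 0 Y = (X powr (p + 2) + Y powr (p + 2) - \<bar>X - Y\<bar> powr (p + 2)) / ((p + 1) * (p + 2))"
  unfolding Tcell_def DD_def pw_def using assms by (simp add: abs_minus_commute)



definition Gs :: "real \<Rightarrow> nat \<Rightarrow> nat \<Rightarrow> nat \<Rightarrow> real \<Rightarrow> real \<Rightarrow> real" where
  "Gs \<gamma> q N N' t u = (real N * real N') ^ (q - 1) / kappa \<gamma> q *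
     (\<Sum>i\<in>{0..nat \<lfloor>(real N - 1) * t\<rfloor>}. \<Sum>i'\<in>{0..nat \<lfloor>(real N' - 1) * u\<rfloor>}.
        Acell \<gamma> (real i / real N) (real (i + 1) / real N) (real i' / real N') (real (i' + 1) / real N') ^ q)"

lemma floor_facts:
  fixes N :: nat and t :: real
  assumes N: "N \<ge> 1" and t: "0 \<le> t" "t \<le> 1"
  defines "I \<equiv> nat \<lfloor>(real N - 1) * t\<rfloor>"
  shows "real (Suc I) * (1 / real N) \<le> 1" "\<bar>real (Suc I) / real N - t\<bar> \<le> 1 / real N"
    "real (Suc I) / real N \<ge> 0"
proof -
  have nn: "(real N - 1) * t \<ge> 0" using N t by simp
  have I: "real I = real_of_int \<lfloor>(real N - 1) * t\<rfloor>" unfolding I_def using nn by simp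
  have lo: "(real N - 1) * t - 1 < real I" and hi: "real I \<le> (real N - 1) * t"
    unfolding I by linarith+
  have Np: "real N > 0" using N by simp
  have hi2: "real I + 1 \<le> real N" using hi t N
    by (smt (verit, ccfv_SIG) mult_left_le of_nat_1 of_nat_le_iff)
  show "real (Suc I) * (1 / real N) \<le> 1" using hi2 Np by (simp add: field_simps)
  show "real (Suc I) / real N \<ge> 0" by simp
  have "real (Suc I) / real N - t = (real I + 1 - real N * t) / real N" using Np by (simp add: field_simps)
  moreover have "\<bar>real I + 1 - real N * t\<bar> \<le> 1" using lo hi t by (auto simp: algebra_simps)
  ultimately show "\<bar>real (Suc I) / real N - t\<bar> \<le> 1 / real N"
    using Np by (simp add: abs_divide divide_right_mono)
qed

lemma kappa_pos:
  fixes q :: nat and \<gamma> :: real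
  assumes q: "q \<ge> 1" and g: "1/2 < \<gamma>" "\<gamma> < 1" and p: "-1 < q * (2 * \<gamma> - 2)"
  shows "kappa \<gamma> q > 0"
proof -
  have a: "\<gamma> * q - q + 1 > 0" using p by (simp add: algebra_simps)
  have b: "2 * \<gamma> * q - 2 * q + 1 > 0" using p by (simp add: algebra_simps)
  show ?thesis unfolding kappa_def using a b g by (intro divide_pos_pos mult_pos_pos) auto
qed

lemma G_bound:
  fixes q :: nat and \<gamma> :: real and N N' :: nat and t u :: real
  assumes q: "q \<ge> 1" and g: "1/2 < \<gamma>" "\<gamma> < 1" and p: "-1 < q * (2 * \<gamma> - 2)"
    and N: "N \<ge> 1" "N' \<ge> 1" and t: "0 \<le> t" "t \<le> 1" and u: "0 \<le> u" "u \<le> 1"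
  defines "I \<equiv> nat \<lfloor>(real N - 1) * t\<rfloor>" and "I' \<equiv> nat \<lfloor>(real N' - 1) * u\<rfloor>"
  shows "\<bar>Gs \<gamma> q N N' t u - R (q * (\<gamma> - 1) + 1) (real (Suc I) / real N) (real (Suc I') / real N')\<bar>
     \<le> (4 * (\<gamma> * (2 * \<gamma> - 1)) ^ q * (1 - q * (2 * \<gamma> - 2)) + 5 * ((2 * \<gamma>) ^ q + 2 * (\<gamma> * (2 * \<gamma> - 1)) ^ q / (q * (2 * \<gamma> - 2) + 1)))
        * (max (1 / real N) (1 / real N')) powr (q * (2 * \<gamma> - 2) + 1) / kappa \<gamma> q"
proof -
  define pp where "pp = q * (2 * \<gamma> - 2)"
  define h where "h = 1 / real N"
  define h' where "h' = 1 / real N'"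
  define c where "c = \<gamma> * (2 * \<gamma> - 1)"
  define X where "X = real (Suc I) / real N"
  define Y where "Y = real (Suc I') / real N'"
  have hp: "h > 0" "h' > 0" using N unfolding h_def h'_def by auto
  have kp: "kappa \<gamma> q > 0" by (rule kappa_pos[OF q g p])
  have c: "c > 0" using g unfolding c_def by simp
  have cell: "(real N * real N') ^ (q - 1) *
        Acell \<gamma> (real i / real N) (real (i + 1) / real N) (real i' / real N') (real (i' + 1) / real N') ^ q
      = ecell q \<gamma> (real i * h) (real (Suc i) * h) (real i' * h') (real (Suc i') * h')
        + c ^ q * Tcell pp (real i * h) (real (Suc i) * h) (real i' * h') (real (Suc i') * h')" for i i'
  proof -
    have d: "real (Suc i) * h - real i * h = h" "real (Suc i') * h' - real i' * h' = h'"
      by (simp_all add: algebra_simps)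
    have e: "1 / (h * h') = real N * real N'" unfolding h_def h'_def by simp
    have f: "real i / real N = real i * h" "real (i + 1) / real N = real (Suc i) * h"
            "real i' / real N' = real i' * h'" "real (i' + 1) / real N' = real (Suc i') * h'"
      unfolding h_def h'_def by simp_all
    show ?thesis unfolding ecell_def d e f c_def pp_def by simp
  qed
  have sumeq: "Gs \<gamma> q N N' t u = (1 / kappa \<gamma> q) *
      ((\<Sum>i\<in>{0..I}. \<Sum>i'\<in>{0..I'}. ecell q \<gamma> (real i * h) (real (Suc i) * h) (real i' * h') (real (Suc i') * h'))
       + c ^ q * (\<Sum>i\<in>{0..I}. \<Sum>i'\<in>{0..I'}. Tcell pp (real i * h) (real (Suc i) * h) (real i' * h') (real (Suc i') * h')))"
  proof -
    have "Gs \<gamma> q N N' t u = (1 / kappa \<gamma> q) * (\<Sum>i\<in>{0..I}. \<Sum>i'\<in>{0..I'}. (real N * real N') ^ (q - 1) *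
        Acell \<gamma> (real i / real N) (real (i + 1) / real N) (real i' / real N') (real (i' + 1) / real N') ^ q)"
      unfolding Gs_def I_def[symmetric] I'_def[symmetric] sum_distrib_left by simp
    also have "\<dots> = (1 / kappa \<gamma> q) * (\<Sum>i\<in>{0..I}. \<Sum>i'\<in>{0..I'}.
        ecell q \<gamma> (real i * h) (real (Suc i) * h) (real i' * h') (real (Suc i') * h')
        + c ^ q * Tcell pp (real i * h) (real (Suc i) * h) (real i' * h') (real (Suc i') * h'))"
      by (simp only: cell)
    also have "\<dots> = (1 / kappa \<gamma> q) *
      ((\<Sum>i\<in>{0..I}. \<Sum>i'\<in>{0..I'}. ecell q \<gamma> (real i * h) (real (Suc i) * h) (real i' * h') (real (Suc i') * h'))
       + c ^ q * (\<Sum>i\<in>{0..I}. \<Sum>i'\<in>{0..I'}. Tcell pp (real i * h) (real (Suc i) * h) (real i' * h') (real (Suc i') * h')))"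
      by (simp only: sum.distrib sum_distrib_left)
    finally show ?thesis .
  qed
  have tel: "(\<Sum>i\<in>{0..I}. \<Sum>i'\<in>{0..I'}. Tcell pp (real i * h) (real (Suc i) * h) (real i' * h') (real (Suc i') * h'))
      = Tcell pp 0 X 0 Y"
    using Tcell_tele[where p=pp and x="\<lambda>i. real i * h" and I=I and y="\<lambda>i. real i * h'" and I'=I'] unfolding X_def Y_def h_def h'_def by simp
  have XY: "X \<ge> 0" "Y \<ge> 0" unfolding X_def Y_def by simp_all
  have Rval: "c ^ q * Tcell pp 0 X 0 Y / kappa \<gamma> q = R (q * (\<gamma> - 1) + 1) X Y"
  proof -
    have ex: "2 * (real q * (\<gamma> - 1) + 1) = pp + 2" unfolding pp_def by (simp add: algebra_simps)
    have k: "kappa \<gamma> q = c ^ q / ((\<gamma> * q - q + 1) * (2 * \<gamma> * q - 2 * q + 1))"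
      unfolding kappa_def c_def by (simp add: power_mult_distrib)
    have a: "\<gamma> * q - q + 1 > 0" using p by (simp add: algebra_simps)
    have b: "2 * \<gamma> * q - 2 * q + 1 > 0" using p by (simp add: algebra_simps)
    have p1: "(pp + 1) * (pp + 2) = (2 * \<gamma> * q - 2 * q + 1) * (2 * (\<gamma> * q - q + 1))"
      unfolding pp_def by (simp add: algebra_simps)
    define S where "S = X powr (pp + 2) + Y powr (pp + 2) - \<bar>X - Y\<bar> powr (pp + 2)"
    define A where "A = \<gamma> * q - q + 1"
    define B where "B = 2 * \<gamma> * q - 2 * q + 1"
    have RS: "R (q * (\<gamma> - 1) + 1) X Y = S / 2" unfolding R_def ex S_def ..
    have TS: "Tcell pp 0 X 0 Y = S / (B * (2 * A))" unfolding Tcell_R[OF XY] S_def[symmetric] p1 A_def B_def ..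
    have "c ^ q * (S / (B * (2 * A))) / (c ^ q / (A * B)) = S / 2"
      using a b c unfolding A_def[symmetric] B_def[symmetric] by (simp add: field_simps)
    then show ?thesis unfolding RS TS k A_def[symmetric] B_def[symmetric] .
  qed
  have E: "\<bar>\<Sum>i\<in>{0..I}. \<Sum>i'\<in>{0..I'}. ecell q \<gamma> (real i * h) (real (Suc i) * h) (real i' * h') (real (Suc i') * h')\<bar>
     \<le> (4 * c ^ q * (1 - pp) + 5 * ((2 * \<gamma>) ^ q + 2 * c ^ q / (pp + 1))) * (max h h') powr (pp + 1)"
    unfolding c_def
  proof (rule grid_err[OF q g _ _ hp refl])
    show "pp = real q * (2 * \<gamma> - 2)" unfolding pp_def ..
    show "-1 < pp" using p unfolding pp_def .
    show "real (Suc I) * h \<le> 1" using floor_facts(1)[OF N(1) t] unfolding I_def h_def .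
    show "real (Suc I') * h' \<le> 1" using floor_facts(1)[OF N(2) u] unfolding I'_def h'_def .
  qed
  have "Gs \<gamma> q N N' t u - R (q * (\<gamma> - 1) + 1) X Y
      = (\<Sum>i\<in>{0..I}. \<Sum>i'\<in>{0..I'}. ecell q \<gamma> (real i * h) (real (Suc i) * h) (real i' * h') (real (Suc i') * h')) / kappa \<gamma> q"
    unfolding sumeq tel Rval[symmetric] by (simp add: add_divide_distrib)
  then have "\<bar>Gs \<gamma> q N N' t u - R (q * (\<gamma> - 1) + 1) X Y\<bar>
      = \<bar>\<Sum>i\<in>{0..I}. \<Sum>i'\<in>{0..I'}. ecell q \<gamma> (real i * h) (real (Suc i) * h) (real i' * h') (real (Suc i') * h')\<bar> / kappa \<gamma> q"
    using kp by (simp add: abs_divide)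
  also have "\<dots> \<le> (4 * c ^ q * (1 - pp) + 5 * ((2 * \<gamma>) ^ q + 2 * c ^ q / (pp + 1))) * (max h h') powr (pp + 1) / kappa \<gamma> q"
    using E kp by (intro divide_right_mono) auto
  finally show ?thesis unfolding X_def Y_def c_def pp_def h_def h'_def .
qed



lemma lip_powr0:
  fixes x y r :: real
  assumes "0 \<le> y" "y \<le> x" "x \<le> 1" "1 \<le> r"
  shows "x powr r - y powr r \<le> r * (x - y)"
proof (cases "y = 0")
  case True
  have "x powr r \<le> x powr 1" using assms powr_mono'[of 1 r x] by simp
  also have "\<dots> \<le> r * x" using assms by (cases "x = 0") (auto intro: order_trans[of _ "1 * x"] mult_right_mono)
  finally show ?thesis using True assms by simp
next
  case False
  show ?thesis
  proof (cases "y = x")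
    case True then show ?thesis by simp
  next
    case False
    have y: "0 < y" "y < x" using assms \<open>y \<noteq> 0\<close> False by auto
    obtain z where z: "y < z" "z < x" "x powr r - y powr r = (x - y) * (r * z powr (r - 1))"
      using mvt_powr[OF y] by blast
    have "z powr (r - 1) \<le> 1 powr (r - 1)" using z y assms by (intro powr_mono2) auto
    then have "r * z powr (r - 1) \<le> r" using assms by simp
    then show ?thesis unfolding z(3) using y by (simp add: mult.commute mult_left_mono)
  qed
qed

lemma lip_powr:
  fixes x y r :: real
  assumes "0 \<le> x" "x \<le> 1" "0 \<le> y" "y \<le> 1" "1 \<le> r"
  shows "\<bar>x powr r - y powr r\<bar> \<le> r * \<bar>x - y\<bar>"
proof (cases "y \<le> x")
  case True
  moreover have "y powr r \<le> x powr r" using True assms by (intro powr_mono2) auto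
  ultimately show ?thesis using lip_powr0[of y x r] assms by simp
next
  case False
  moreover have "x powr r \<le> y powr r" using False assms by (intro powr_mono2) auto
  ultimately show ?thesis using lip_powr0[of x y r] assms by simp
qed

lemma R_lip:
  fixes H X Y t u :: real
  assumes "1 \<le> 2 * H" and X: "0 \<le> X" "X \<le> 1" and Y: "0 \<le> Y" "Y \<le> 1"
    and t: "0 \<le> t" "t \<le> 1" and u: "0 \<le> u" "u \<le> 1"
  shows "\<bar>R H X Y - R H t u\<bar> \<le> 2 * H * (\<bar>X - t\<bar> + \<bar>Y - u\<bar>)"
proof -
  have a: "\<bar>X powr (2*H) - t powr (2*H)\<bar> \<le> 2 * H * \<bar>X - t\<bar>" using assms by (intro lip_powr) auto
  have b: "\<bar>Y powr (2*H) - u powr (2*H)\<bar> \<le> 2 * H * \<bar>Y - u\<bar>" using assms by (intro lip_powr) auto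
  have c: "\<bar>\<bar>X - Y\<bar> powr (2*H) - \<bar>t - u\<bar> powr (2*H)\<bar> \<le> 2 * H * \<bar>\<bar>X - Y\<bar> - \<bar>t - u\<bar>\<bar>"
    using assms by (intro lip_powr) auto
  have d: "\<bar>\<bar>X - Y\<bar> - \<bar>t - u\<bar>\<bar> \<le> \<bar>X - t\<bar> + \<bar>Y - u\<bar>" by linarith
  have H: "H \<ge> 0" using assms by simp
  have c': "\<bar>\<bar>X - Y\<bar> powr (2*H) - \<bar>t - u\<bar> powr (2*H)\<bar> \<le> 2 * H * (\<bar>X - t\<bar> + \<bar>Y - u\<bar>)"
    using c d H by (smt (verit) mult_left_mono)
  have "R H X Y - R H t u = ((X powr (2*H) - t powr (2*H)) + (Y powr (2*H) - u powr (2*H))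
      - (\<bar>X - Y\<bar> powr (2*H) - \<bar>t - u\<bar> powr (2*H))) / 2"
    unfolding R_def by (simp add: field_simps)
  then have "\<bar>R H X Y - R H t u\<bar> = \<bar>(X powr (2*H) - t powr (2*H)) + (Y powr (2*H) - u powr (2*H))
      - (\<bar>X - Y\<bar> powr (2*H) - \<bar>t - u\<bar> powr (2*H))\<bar> / 2"
    by (simp only: abs_divide)
  also have "\<dots> \<le> (2 * H * \<bar>X - t\<bar> + 2 * H * \<bar>Y - u\<bar> + 2 * H * (\<bar>X - t\<bar> + \<bar>Y - u\<bar>)) / 2"
    using a b c' by (intro divide_right_mono) linarith+
  also have "\<dots> = 2 * H * (\<bar>X - t\<bar> + \<bar>Y - u\<bar>)" by (simp add: algebra_simps)
  finally show ?thesis .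
qed

lemma core:
  fixes q :: nat and \<gamma> t u e :: real
  assumes q: "q \<ge> 1" and g: "1/2 < \<gamma>" "\<gamma> < 1" and p: "-1 < q * (2 * \<gamma> - 2)"
    and t: "0 \<le> t" "t \<le> 1" and u: "0 \<le> u" "u \<le> 1" and e: "e > 0"
  shows "\<exists>N0. \<forall>N\<ge>N0. \<forall>N'\<ge>N0. \<bar>Gs \<gamma> q N N' t u - R (q * (\<gamma> - 1) + 1) t u\<bar> < e"
proof -
  define pp where "pp = real q * (2 * \<gamma> - 2)"
  define H where "H = real q * (\<gamma> - 1) + 1"
  define K where "K = (4 * (\<gamma> * (2 * \<gamma> - 1)) ^ q * (1 - pp) + 5 * ((2 * \<gamma>) ^ q + 2 * (\<gamma> * (2 * \<gamma> - 1)) ^ q / (pp + 1))) / kappa \<gamma> q"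
  have kp: "kappa \<gamma> q > 0" by (rule kappa_pos[OF q g p])
  have pp: "-1 < pp" "pp < 0" using p g q unfolding pp_def by (auto simp: mult_pos_neg)
  have K: "K \<ge> 0" unfolding K_def using kp pp g
    by (intro divide_nonneg_pos add_nonneg_nonneg mult_nonneg_nonneg) auto
  have H: "1 \<le> 2 * H" "2 * H \<le> 2" using pp unfolding H_def pp_def by (auto simp: algebra_simps)
  define d1 where "d1 = (e / (2 * (K + 1))) powr (1 / (pp + 1))"
  define d2 where "d2 = e / (8 * H)"
  have d1: "d1 > 0" unfolding d1_def using e K by simp
  have d2: "d2 > 0" unfolding d2_def using e H by simp
  obtain n where n: "inverse (real (Suc n)) < min d1 d2" using reals_Archimedean[of "min d1 d2"] d1 d2 by auto
  define N0 where "N0 = Suc n"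
  have N0: "N0 \<ge> 1" "1 / real N0 < d1" "1 / real N0 < d2" using n unfolding N0_def by (auto simp: field_simps)
  show ?thesis
  proof (intro exI[of _ N0] allI impI)
    fix N N' :: nat assume NN: "N \<ge> N0" "N' \<ge> N0"
    then have N: "N \<ge> 1" "N' \<ge> 1" using N0 by auto
    define I where "I = nat \<lfloor>(real N - 1) * t\<rfloor>"
    define I' where "I' = nat \<lfloor>(real N' - 1) * u\<rfloor>"
    define X where "X = real (Suc I) / real N"
    define Y where "Y = real (Suc I') / real N'"
    have inv: "1 / real N \<le> 1 / real N0" "1 / real N' \<le> 1 / real N0"
      using NN N0 by (auto intro!: divide_left_mono)
    have m: "max (1 / real N) (1 / real N') \<le> 1 / real N0" using inv by simp
    have b1: "\<bar>Gs \<gamma> q N N' t u - R H X Y\<bar> \<le> K * (max (1 / real N) (1 / real N')) powr (pp + 1)"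
      using G_bound[OF q g p N t u] unfolding K_def H_def X_def Y_def I_def I'_def pp_def by simp
    have "(max (1 / real N) (1 / real N')) powr (pp + 1) \<le> (1 / real N0) powr (pp + 1)"
      using m pp by (intro powr_mono2) (auto simp: max.coboundedI1)
    also have "\<dots> < d1 powr (pp + 1)" using N0 pp by (intro powr_less_mono2) auto
    also have "\<dots> = e / (2 * (K + 1))" unfolding d1_def using pp e K by (simp add: powr_powr)
    finally have "K * (max (1 / real N) (1 / real N')) powr (pp + 1) \<le> K * (e / (2 * (K + 1)))"
      using K by (intro mult_left_mono) auto
    also have "\<dots> < e / 2" using K e by (simp add: field_simps)
    finally have b1': "\<bar>Gs \<gamma> q N N' t u - R H X Y\<bar> < e / 2" using b1 by linarith
    have fX: "\<bar>X - t\<bar> \<le> 1 / real N" "X \<ge> 0" "X \<le> 1"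
      using floor_facts[OF N(1) t] unfolding X_def I_def by (auto simp: field_simps)
    have fY: "\<bar>Y - u\<bar> \<le> 1 / real N'" "Y \<ge> 0" "Y \<le> 1"
      using floor_facts[OF N(2) u] unfolding Y_def I'_def by (auto simp: field_simps)
    have "\<bar>R H X Y - R H t u\<bar> \<le> 2 * H * (\<bar>X - t\<bar> + \<bar>Y - u\<bar>)"
      using fX fY t u H by (intro R_lip) auto
    also have "\<dots> \<le> 2 * H * (d2 + d2)"
      using fX fY inv N0 H by (intro mult_left_mono add_mono) auto
    also have "\<dots> = e / 2" unfolding d2_def using H by (simp add: field_simps)
    finally have "\<bar>R H X Y - R H t u\<bar> \<le> e / 2" .
    with b1' show "\<bar>Gs \<gamma> q N N' t u - R (q * (\<gamma> - 1) + 1) t u\<bar> < e" unfolding H_def by linarith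
  qed
qed



lemma ipH_Acell: "ipH \<alpha> \<beta> (a, b, c, d) (a', b', c', d') = Acell \<alpha> a b a' b' * Acell \<beta> c d c' d'"
  unfolding ipH_def Acell_def by simp

lemma valid_cell:
  fixes N M :: nat and t s :: real and i j :: nat
  assumes N: "N \<ge> 1" "M \<ge> 1" and t: "0 \<le> t" "t \<le> 1" and s: "0 \<le> s" "s \<le> 1"
    and i: "i \<le> nat \<lfloor>(real N - 1) * t\<rfloor>" and j: "j \<le> nat \<lfloor>(real M - 1) * s\<rfloor>"
  shows "valid_rect (real i / real N, real (i + 1) / real N, real j / real M, real (j + 1) / real M)"
proof -
  have a: "real (Suc (nat \<lfloor>(real N - 1) * t\<rfloor>)) * (1 / real N) \<le> 1" by (rule floor_facts(1)[OF N(1) t])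
  have b: "real (Suc (nat \<lfloor>(real M - 1) * s\<rfloor>)) * (1 / real M) \<le> 1" by (rule floor_facts(1)[OF N(2) s])
  have "real (i + 1) \<le> real (Suc (nat \<lfloor>(real N - 1) * t\<rfloor>))" using i by simp
  then have ai: "real (i + 1) / real N \<le> 1" using a N by (simp add: field_simps)
  have "real (j + 1) \<le> real (Suc (nat \<lfloor>(real M - 1) * s\<rfloor>))" using j by simp
  then have bj: "real (j + 1) / real M \<le> 1" using b N by (simp add: field_simps)
  show ?thesis unfolding valid_rect_def using ai bj N by (simp add: divide_right_mono)
qed

lemma sum4_product:
  fixes f g :: "nat \<Rightarrow> nat \<Rightarrow> real"
  shows "(\<Sum>i\<in>A. \<Sum>j\<in>B. \<Sum>i'\<in>C. \<Sum>j'\<in>D. f i i' * g j j')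
       = (\<Sum>i\<in>A. \<Sum>i'\<in>C. f i i') * (\<Sum>j\<in>B. \<Sum>j'\<in>D. g j j')"
proof -
  have "(\<Sum>i\<in>A. \<Sum>j\<in>B. \<Sum>i'\<in>C. \<Sum>j'\<in>D. f i i' * g j j')
      = (\<Sum>i\<in>A. \<Sum>i'\<in>C. \<Sum>j\<in>B. \<Sum>j'\<in>D. f i i' * g j j')"
    by (rule sum.cong[OF refl], rule sum.swap)
  also have "\<dots> = (\<Sum>i\<in>A. \<Sum>i'\<in>C. f i i' * (\<Sum>j\<in>B. \<Sum>j'\<in>D. g j j'))"
    by (simp add: sum_distrib_left)
  also have "\<dots> = (\<Sum>i\<in>A. \<Sum>i'\<in>C. f i i') * (\<Sum>j\<in>B. \<Sum>j'\<in>D. g j j')"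
    by (simp add: sum_distrib_right)
  finally show ?thesis .
qed

lemma hNM_inner:
  fixes q :: nat and \<alpha> \<beta> :: real and E :: "rect list \<Rightarrow> 'a::real_inner"
  assumes tensor_inner: "\<And>xs ys. length xs = q \<Longrightarrow> length ys = q \<Longrightarrow>
          list_all valid_rect xs \<Longrightarrow> list_all valid_rect ys \<Longrightarrow>
          inner (E xs) (E ys) = (\<Prod>k<q. ipH \<alpha> \<beta> (xs ! k) (ys ! k))"
    and ka: "kappa \<alpha> q > 0" and kb: "kappa \<beta> q > 0"
    and N: "N \<ge> 1" "M \<ge> 1" "N' \<ge> 1" "M' \<ge> 1"
    and t: "0 \<le> t" "t \<le> 1" and s: "0 \<le> s" "s \<le> 1" and u: "0 \<le> u" "u \<le> 1" and v: "0 \<le> v" "v \<le> 1"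
  shows "fact q * inner (hNM E q \<alpha> \<beta> N M t s) (hNM E q \<alpha> \<beta> N' M' u v)
       = Gs \<alpha> q N N' t u * Gs \<beta> q M M' s v"
proof -
  define I where "I = nat \<lfloor>(real N - 1) * t\<rfloor>"
  define J where "J = nat \<lfloor>(real M - 1) * s\<rfloor>"
  define I' where "I' = nat \<lfloor>(real N' - 1) * u\<rfloor>"
  define J' where "J' = nat \<lfloor>(real M' - 1) * v\<rfloor>"
  define rc where "rc n m i j = (real i / real n, real (i + 1) / real n, real j / real m, real (j + 1) / real m)"
    for n m i j :: nat
  define fa where "fa i i' = Acell \<alpha> (real i / real N) (real (i + 1) / real N) (real i' / real N') (real (i' + 1) / real N') ^ q" for i i'
  define fb where "fb j j' = Acell \<beta> (real j / real M) (real (j + 1) / real M) (real j' / real M') (real (j' + 1) / real M') ^ q" for j j'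
  have ip: "inner (E (replicate q (rc N M i j))) (E (replicate q (rc N' M' i' j'))) = fa i i' * fb j j'"
    if "i \<in> {0..I}" "j \<in> {0..J}" "i' \<in> {0..I'}" "j' \<in> {0..J'}" for i j i' j'
  proof -
    have v1: "valid_rect (rc N M i j)" unfolding rc_def
      using that by (intro valid_cell[OF N(1,2) t s]) (auto simp: I_def J_def)
    have v2: "valid_rect (rc N' M' i' j')" unfolding rc_def
      using that by (intro valid_cell[OF N(3,4) u v]) (auto simp: I'_def J'_def)
    have "inner (E (replicate q (rc N M i j))) (E (replicate q (rc N' M' i' j')))
        = (\<Prod>k<q. ipH \<alpha> \<beta> (rc N M i j) (rc N' M' i' j'))"
      using v1 v2 by (subst tensor_inner) (auto simp: list_all_iff)
    also have "\<dots> = ipH \<alpha> \<beta> (rc N M i j) (rc N' M' i' j') ^ q" by simp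
    also have "\<dots> = fa i i' * fb j j'"
      unfolding rc_def ipH_Acell fa_def fb_def by (simp add: power_mult_distrib)
    finally show ?thesis .
  qed
  have hN: "hNM E q \<alpha> \<beta> N M t s = (phi q \<alpha> \<beta> N M / fact q) *\<^sub>R (\<Sum>i\<in>{0..I}. \<Sum>j\<in>{0..J}. E (replicate q (rc N M i j)))"
    unfolding hNM_def I_def J_def rc_def ..
  have hN': "hNM E q \<alpha> \<beta> N' M' u v = (phi q \<alpha> \<beta> N' M' / fact q) *\<^sub>R (\<Sum>i\<in>{0..I'}. \<Sum>j\<in>{0..J'}. E (replicate q (rc N' M' i j)))"
    unfolding hNM_def I'_def J'_def rc_def ..
  have "inner (\<Sum>i\<in>{0..I}. \<Sum>j\<in>{0..J}. E (replicate q (rc N M i j))) (\<Sum>i\<in>{0..I'}. \<Sum>j\<in>{0..J'}. E (replicate q (rc N' M' i j)))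
     = (\<Sum>i\<in>{0..I}. \<Sum>j\<in>{0..J}. \<Sum>i'\<in>{0..I'}. \<Sum>j'\<in>{0..J'}. fa i i' * fb j j')"
  proof -
    have "inner (\<Sum>i\<in>{0..I}. \<Sum>j\<in>{0..J}. E (replicate q (rc N M i j))) (\<Sum>i\<in>{0..I'}. \<Sum>j\<in>{0..J'}. E (replicate q (rc N' M' i j)))
       = (\<Sum>i\<in>{0..I}. \<Sum>j\<in>{0..J}. \<Sum>i'\<in>{0..I'}. \<Sum>j'\<in>{0..J'}. inner (E (replicate q (rc N M i j))) (E (replicate q (rc N' M' i' j'))))"
      by (simp only: inner_sum_left) (simp only: inner_sum_right)
    also have "\<dots> = (\<Sum>i\<in>{0..I}. \<Sum>j\<in>{0..J}. \<Sum>i'\<in>{0..I'}. \<Sum>j'\<in>{0..J'}. fa i i' * fb j j')"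
      by (rule sum.cong[OF refl], rule sum.cong[OF refl], rule sum.cong[OF refl], rule sum.cong[OF refl], rule ip) auto
    finally show ?thesis .
  qed
  also have "\<dots> = (\<Sum>i\<in>{0..I}. \<Sum>i'\<in>{0..I'}. fa i i') * (\<Sum>j\<in>{0..J}. \<Sum>j'\<in>{0..J'}. fb j j')"
    by (rule sum4_product)
  finally have inn: "inner (\<Sum>i\<in>{0..I}. \<Sum>j\<in>{0..J}. E (replicate q (rc N M i j))) (\<Sum>i\<in>{0..I'}. \<Sum>j\<in>{0..J'}. E (replicate q (rc N' M' i j)))
     = (\<Sum>i\<in>{0..I}. \<Sum>i'\<in>{0..I'}. fa i i') * (\<Sum>j\<in>{0..J}. \<Sum>j'\<in>{0..J'}. fb j j')" .
  define F where "F = fact q / (kappa \<alpha> q * kappa \<beta> q)"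
  have F: "F \<ge> 0" unfolding F_def using ka kb by simp
  have ph: "phi q \<alpha> \<beta> N M * phi q \<alpha> \<beta> N' M' = F * (real N * real N') ^ (q - 1) * (real M * real M') ^ (q - 1)"
  proof -
    have "sqrt F * sqrt F = F" using F by simp
    then show ?thesis unfolding phi_def F_def[symmetric] by (simp add: power_mult_distrib algebra_simps)
  qed
  have fq: "fact q > (0::real)" by simp
  have "fact q * inner (hNM E q \<alpha> \<beta> N M t s) (hNM E q \<alpha> \<beta> N' M' u v)
      = fact q * (phi q \<alpha> \<beta> N M / fact q) * (phi q \<alpha> \<beta> N' M' / fact q) *
        ((\<Sum>i\<in>{0..I}. \<Sum>i'\<in>{0..I'}. fa i i') * (\<Sum>j\<in>{0..J}. \<Sum>j'\<in>{0..J'}. fb j j'))"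
    unfolding hN hN' inner_scaleR_left inner_scaleR_right inn by (simp add: algebra_simps)
  also have "\<dots> = (phi q \<alpha> \<beta> N M * phi q \<alpha> \<beta> N' M') / fact q *
        ((\<Sum>i\<in>{0..I}. \<Sum>i'\<in>{0..I'}. fa i i') * (\<Sum>j\<in>{0..J}. \<Sum>j'\<in>{0..J'}. fb j j'))"
    using fq by (simp add: field_simps)
  also have "\<dots> = Gs \<alpha> q N N' t u * Gs \<beta> q M M' s v"
    unfolding ph Gs_def I_def[symmetric] J_def[symmetric] I'_def[symmetric] J'_def[symmetric]
      fa_def[symmetric] fb_def[symmetric] F_def using fq ka kb by (simp add: field_simps)
  finally show ?thesis .
qed



lemma R_bound:
  fixes H t u :: real
  assumes "H \<ge> 0" "0 \<le> t" "t \<le> 1" "0 \<le> u" "u \<le> 1"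
  shows "\<bar>R H t u\<bar> \<le> 1"
proof -
  have a: "t powr (2*H) \<le> 1" "u powr (2*H) \<le> 1" "\<bar>t - u\<bar> powr (2*H) \<le> 1"
    using assms by (auto intro!: powr_le1)
  have b: "0 \<le> t powr (2*H)" "0 \<le> u powr (2*H)" "0 \<le> \<bar>t - u\<bar> powr (2*H)" by simp_all
  have r: "R H t u = (t powr (2*H) + u powr (2*H) - \<bar>t - u\<bar> powr (2*H)) / 2" by (simp add: R_def)
  have gen: "\<bar>(A + B - C) / 2\<bar> \<le> 1" if "A \<le> 1" "B \<le> 1" "C \<le> 1" "0 \<le> A" "0 \<le> B" "0 \<le> C" for A B C :: real
    using that by (simp add: abs_le_iff)
  show ?thesis unfolding r using a b by (intro gen)
qed

lemma prod_close:
  fixes a b A B d :: real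
  assumes "\<bar>a - A\<bar> < d" "\<bar>b - B\<bar> < d" "\<bar>A\<bar> \<le> 1" "\<bar>B\<bar> \<le> 1" "d \<le> 1"
  shows "\<bar>a * b - A * B\<bar> < 3 * d"
proof -
  have "a * b - A * B = (a - A) * b + A * (b - B)" by (simp add: algebra_simps)
  then have e1: "\<bar>a * b - A * B\<bar> \<le> \<bar>a - A\<bar> * \<bar>b\<bar> + \<bar>A\<bar> * \<bar>b - B\<bar>" by (simp add: abs_mult[symmetric] abs_triangle_ineq)
  have bb: "\<bar>b\<bar> \<le> 2" using assms by linarith
  have e2: "\<bar>a - A\<bar> * \<bar>b\<bar> \<le> d * 2" using assms bb by (intro mult_mono) auto
  have e3: "\<bar>A\<bar> * \<bar>b - B\<bar> \<le> 1 * \<bar>b - B\<bar>" using assms by (intro mult_right_mono) auto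
  show ?thesis using e1 e2 e3 assms(2) by linarith
qed



theorem mainTheorem4:
  fixes q :: nat and \<alpha> \<beta> :: real
    and E :: "rect list \<Rightarrow> 'a::{real_inner, complete_space}"
    and P :: "'b measure" and I :: "'a \<Rightarrow> 'b \<Rightarrow> real"
  assumes q: "q \<ge> 2"
    and \<alpha>: "1 - 1 / (2 * q) < \<alpha>" "\<alpha> < 1"
    and \<beta>: "1 - 1 / (2 * q) < \<beta>" "\<beta> < 1"
    and tensor_inner: "\<And>xs ys. length xs = q \<Longrightarrow> length ys = q \<Longrightarrow>
          list_all valid_rect xs \<Longrightarrow> list_all valid_rect ys \<Longrightarrow>
          inner (E xs) (E ys) = (\<Prod>k<q. ipH \<alpha> \<beta> (xs ! k) (ys ! k))"
    and tensor_dense: "closure (span (E ` {xs. length xs = q \<and> list_all valid_rect xs})) = UNIV"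
    and P: "prob_space P"
    and I_meas: "\<And>f. I f \<in> borel_measurable P"
    and I_isometry: "\<And>f g. integral\<^sup>L P (\<lambda>\<omega>. I f \<omega> * I g \<omega>) = fact q * inner f g"
  shows "\<exists>\<mu>. (\<forall>t\<in>{0..1}. \<forall>s\<in>{0..1}.
              ((\<lambda>(N, M). hNM E q \<alpha> \<beta> N M t s) \<longlongrightarrow> \<mu> t s) (sequentially \<times>\<^sub>F sequentially))
          \<and> (\<forall>t\<in>{0..1}. \<forall>s\<in>{0..1}. \<forall>u\<in>{0..1}. \<forall>v\<in>{0..1}.
              integral\<^sup>L P (\<lambda>\<omega>. I (\<mu> t s) \<omega> * I (\<mu> u v) \<omega>)
                = R (q * (\<alpha> - 1) + 1) t u * R (q * (\<beta> - 1) + 1) s v)"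
proof -
  define hh where "hh N M t s = hNM E q \<alpha> \<beta> N M t s" for N M t s
  define L where "L t s u v = R (q * (\<alpha> - 1) + 1) t u * R (q * (\<beta> - 1) + 1) s v" for t s u v
  have q1: "q \<ge> 1" using q by simp
  have qpos: "real q > 0" using q by simp
  have ga: "1/2 < \<alpha>" "-1 < q * (2 * \<alpha> - 2)"
  proof -
    have "1 / (2 * real q) \<le> 1 / 4" using q by (simp add: field_simps)
    then show "1/2 < \<alpha>" using \<alpha> by linarith
    have "real q * (1 - \<alpha>) < real q * (1 / (2 * q))" using \<alpha> qpos by (intro mult_strict_left_mono) auto
    then show "-1 < q * (2 * \<alpha> - 2)" using qpos by (simp add: algebra_simps)
  qed
  have gb: "1/2 < \<beta>" "-1 < q * (2 * \<beta> - 2)"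
  proof -
    have "1 / (2 * real q) \<le> 1 / 4" using q by (simp add: field_simps)
    then show "1/2 < \<beta>" using \<beta> by linarith
    have "real q * (1 - \<beta>) < real q * (1 / (2 * q))" using \<beta> qpos by (intro mult_strict_left_mono) auto
    then show "-1 < q * (2 * \<beta> - 2)" using qpos by (simp add: algebra_simps)
  qed
  have ka: "kappa \<alpha> q > 0" by (rule kappa_pos[OF q1 ga(1) \<alpha>(2) ga(2)])
  have kb: "kappa \<beta> q > 0" by (rule kappa_pos[OF q1 gb(1) \<beta>(2) gb(2)])
  have Ha: "q * (\<alpha> - 1) + 1 \<ge> 0" using ga by (simp add: algebra_simps)
  have Hb: "q * (\<beta> - 1) + 1 \<ge> 0" using gb by (simp add: algebra_simps)
  have close: "\<exists>N0. \<forall>N M N' M'. N \<ge> N0 \<longrightarrow> M \<ge> N0 \<longrightarrow> N' \<ge> N0 \<longrightarrow> M' \<ge> N0 \<longrightarrow>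
      \<bar>fact q * inner (hh N M t s) (hh N' M' u v) - L t s u v\<bar> < e"
    if t: "0 \<le> t" "t \<le> 1" and s: "0 \<le> s" "s \<le> 1" and u: "0 \<le> u" "u \<le> 1" and v: "0 \<le> v" "v \<le> 1"
      and e: "e > 0" for t s u v e
  proof -
    define d where "d = min 1 (e / 3)"
    have d: "d > 0" "d \<le> 1" "3 * d \<le> e" using e unfolding d_def by auto
    obtain Na where Na: "\<forall>N\<ge>Na. \<forall>N'\<ge>Na. \<bar>Gs \<alpha> q N N' t u - R (q * (\<alpha> - 1) + 1) t u\<bar> < d"
      using core[OF q1 ga(1) \<alpha>(2) ga(2) t u d(1)] by blast
    obtain Nb where Nb: "\<forall>N\<ge>Nb. \<forall>N'\<ge>Nb. \<bar>Gs \<beta> q N N' s v - R (q * (\<beta> - 1) + 1) s v\<bar> < d"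
      using core[OF q1 gb(1) \<beta>(2) gb(2) s v d(1)] by blast
    show ?thesis
    proof (intro exI[of _ "max 1 (max Na Nb)"] allI impI)
      fix N M N' M' :: nat
      assume NN: "N \<ge> max 1 (max Na Nb)" "M \<ge> max 1 (max Na Nb)" "N' \<ge> max 1 (max Na Nb)" "M' \<ge> max 1 (max Na Nb)"
      have "fact q * inner (hh N M t s) (hh N' M' u v) = Gs \<alpha> q N N' t u * Gs \<beta> q M M' s v"
        unfolding hh_def using NN t s u v by (intro hNM_inner[OF tensor_inner ka kb]) auto
      moreover have "\<bar>Gs \<alpha> q N N' t u * Gs \<beta> q M M' s v - L t s u v\<bar> < 3 * d"
        unfolding L_def
      proof (rule prod_close)
        show "\<bar>Gs \<alpha> q N N' t u - R (q * (\<alpha> - 1) + 1) t u\<bar> < d" using Na NN by auto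
        show "\<bar>Gs \<beta> q M M' s v - R (q * (\<beta> - 1) + 1) s v\<bar> < d" using Nb NN by auto
        show "\<bar>R (q * (\<alpha> - 1) + 1) t u\<bar> \<le> 1" using Ha t u by (intro R_bound) auto
        show "\<bar>R (q * (\<beta> - 1) + 1) s v\<bar> \<le> 1" using Hb s v by (intro R_bound) auto
      qed (use d in auto)
      ultimately show "\<bar>fact q * inner (hh N M t s) (hh N' M' u v) - L t s u v\<bar> < e" using d by linarith
    qed
  qed
  have near: "\<exists>N0. \<forall>N M N' M'. N \<ge> N0 \<longrightarrow> M \<ge> N0 \<longrightarrow> N' \<ge> N0 \<longrightarrow> M' \<ge> N0 \<longrightarrow>
      norm (hh N M t s - hh N' M' t s) < e"
    if t: "0 \<le> t" "t \<le> 1" and s: "0 \<le> s" "s \<le> 1" and e: "e > 0" for t s e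
  proof -
    have e2: "e\<^sup>2 / 4 > 0" using e by simp
    obtain N0 where N0: "\<And>N M N' M'. N \<ge> N0 \<Longrightarrow> M \<ge> N0 \<Longrightarrow> N' \<ge> N0 \<Longrightarrow> M' \<ge> N0 \<Longrightarrow>
      \<bar>fact q * inner (hh N M t s) (hh N' M' t s) - L t s t s\<bar> < e\<^sup>2 / 4"
      using close[OF t s t s e2] by blast
    show ?thesis
    proof (intro exI[of _ N0] allI impI)
      fix N M N' M' :: nat assume NN: "N \<ge> N0" "M \<ge> N0" "N' \<ge> N0" "M' \<ge> N0"
      define a where "a = hh N M t s"
      define b where "b = hh N' M' t s"
      have "fact q * (norm (a - b))\<^sup>2 = fact q * inner a a - 2 * (fact q * inner a b) + fact q * inner b b"
        unfolding power2_norm_eq_inner by (simp add: inner_diff algebra_simps inner_commute)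
      also have "\<dots> < e\<^sup>2"
        using N0[OF NN(1,2,1,2)] N0[OF NN] N0[OF NN(3,4,3,4)] unfolding a_def b_def by linarith
      finally have "fact q * (norm (a - b))\<^sup>2 < e\<^sup>2" .
      moreover have "(norm (a - b))\<^sup>2 \<le> fact q * (norm (a - b))\<^sup>2"
        using mult_right_mono[of 1 "fact q" "(norm (a - b))\<^sup>2"] by simp
      ultimately have "(norm (a - b))\<^sup>2 < e\<^sup>2" by linarith
      then show "norm (hh N M t s - hh N' M' t s) < e"
        unfolding a_def[symmetric] b_def[symmetric] using e by (simp add: power_less_imp_less_base)
    qed
  qed
  define \<mu> where "\<mu> t s = lim (\<lambda>k. hh k k t s)" for t s
  have lim: "(\<lambda>k. hh k k t s) \<longlonglongrightarrow> \<mu> t s" if t: "0 \<le> t" "t \<le> 1" and s: "0 \<le> s" "s \<le> 1" for t s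
  proof -
    have "Cauchy (\<lambda>k. hh k k t s)"
    proof (rule metric_CauchyI)
      fix e :: real assume e: "e > 0"
      obtain N0 where N0: "\<forall>N M N' M'. N \<ge> N0 \<longrightarrow> M \<ge> N0 \<longrightarrow> N' \<ge> N0 \<longrightarrow> M' \<ge> N0 \<longrightarrow>
          norm (hh N M t s - hh N' M' t s) < e" using near[OF t s e] by blast
      show "\<exists>M. \<forall>m\<ge>M. \<forall>n\<ge>M. dist (hh m m t s) (hh n n t s) < e"
        using N0 by (intro exI[of _ N0]) (auto simp: dist_norm)
    qed
    then show ?thesis unfolding \<mu>_def by (simp add: Cauchy_convergent_iff convergent_LIMSEQ_iff)
  qed
  show ?thesis
  proof (intro exI[of _ \<mu>] conjI ballI)
    fix t s :: real assume ts: "t \<in> {0..1}" "s \<in> {0..1}"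
    then have t: "0 \<le> t" "t \<le> 1" and s: "0 \<le> s" "s \<le> 1" by auto
    show "((\<lambda>(N, M). hNM E q \<alpha> \<beta> N M t s) \<longlongrightarrow> \<mu> t s) (sequentially \<times>\<^sub>F sequentially)"
      unfolding tendsto_iff eventually_prod_sequentially
    proof (intro allI impI)
      fix e :: real assume e: "e > 0"
      obtain N0 where N0: "\<forall>N M N' M'. N \<ge> N0 \<longrightarrow> M \<ge> N0 \<longrightarrow> N' \<ge> N0 \<longrightarrow> M' \<ge> N0 \<longrightarrow>
          norm (hh N M t s - hh N' M' t s) < e / 2" using near[OF t s] e by (meson half_gt_zero)
      show "\<exists>N. \<forall>m\<ge>N. \<forall>n\<ge>N. dist ((\<lambda>(N, M). hNM E q \<alpha> \<beta> N M t s) (n, m)) (\<mu> t s) < e"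
      proof (intro exI[of _ N0] allI impI)
        fix m n :: nat assume mn: "m \<ge> N0" "n \<ge> N0"
        have "(\<lambda>k. dist (hh n m t s) (hh k k t s)) \<longlonglongrightarrow> dist (hh n m t s) (\<mu> t s)"
          using lim[OF t s] by (intro tendsto_intros)
        moreover have "\<exists>K. \<forall>k\<ge>K. dist (hh n m t s) (hh k k t s) \<le> e / 2"
          using N0 mn by (intro exI[of _ N0]) (auto simp: dist_norm less_imp_le)
        ultimately have "dist (hh n m t s) (\<mu> t s) \<le> e / 2" by (rule LIMSEQ_le_const2)
        then show "dist ((\<lambda>(N, M). hNM E q \<alpha> \<beta> N M t s) (n, m)) (\<mu> t s) < e"
          using e unfolding hh_def by simp
      qed
    qed
  next
    fix t s u v :: real assume ts: "t \<in> {0..1}" "s \<in> {0..1}" "u \<in> {0..1}" "v \<in> {0..1}"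
    then have t: "0 \<le> t" "t \<le> 1" and s: "0 \<le> s" "s \<le> 1" and u: "0 \<le> u" "u \<le> 1" and v: "0 \<le> v" "v \<le> 1"
      by auto
    have l1: "(\<lambda>k. fact q * inner (hh k k t s) (hh k k u v)) \<longlonglongrightarrow> fact q * inner (\<mu> t s) (\<mu> u v)"
      using lim[OF t s] lim[OF u v] by (intro tendsto_intros)
    have l2: "(\<lambda>k. fact q * inner (hh k k t s) (hh k k u v)) \<longlonglongrightarrow> L t s u v"
    proof (rule LIMSEQ_I)
      fix e :: real assume e: "e > 0"
      obtain N0 where N0: "\<forall>N M N' M'. N \<ge> N0 \<longrightarrow> M \<ge> N0 \<longrightarrow> N' \<ge> N0 \<longrightarrow> M' \<ge> N0 \<longrightarrow>
          \<bar>fact q * inner (hh N M t s) (hh N' M' u v) - L t s u v\<bar> < e"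
        using close[OF t s u v e] by blast
      show "\<exists>no. \<forall>n\<ge>no. norm (fact q * inner (hh n n t s) (hh n n u v) - L t s u v) < e"
        using N0 by (intro exI[of _ N0]) auto
    qed
    have "fact q * inner (\<mu> t s) (\<mu> u v) = L t s u v" using LIMSEQ_unique[OF l1 l2] .
    then show "integral\<^sup>L P (\<lambda>\<omega>. I (\<mu> t s) \<omega> * I (\<mu> u v) \<omega>)
                = R (q * (\<alpha> - 1) + 1) t u * R (q * (\<beta> - 1) + 1) s v"
      unfolding I_isometry L_def .
  qed
qed


end
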